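(* Let $N\ge2$, $M\ge1$, $k\ge0$. There exist constants $C_0,\dots,C_k>0$, depending only on $N,M,k$, such that for every unit vector $\psi\in\mathcal H_M$, $$\mathcal W_k(|\psi\rangle\langle\psi|)=\sum_{\ell=0}^k C_\ell\,\mathcal T^\ell\big(\gamma^{(k-\ell)}_\psi\big),$$ where here $\mathcal T^\ell$ acts on operators on $\mathcal H_{k-\ell}$ (i.e. $\mathcal T^\ell(\Gamma)=\frac{k!}{(k-\ell)!}P_{k}(I_{\mathbb C^N}^{\otimes \ell}\otimes\Gamma)P_{k}$ for $\Gamma$ on $\mathcal H_{k-\ell}$).
   Context: $\mathcal H_n=P_n(\mathbb C^N)^{\otimes n}$ is the totally symmetric subspace, $P_n$ the symmetrizing projection. On the bosonic Fock space $\bigoplus_n\mathcal H_n$, $a^*(v)\phi=\sqrt{n+1}P_{n+1}(v\otimes\phi)$ for $\phi\in\mathcal H_n$, $a(v)=a^*(v)^*$, $a_i=a(e_i)$ for an orthonormal basis $(e_i)$ of $\mathbb C^N$. $\mathcal W_k(\Gamma)=\frac1{k!}\sum_{i_1,\dots,i_k}\sum_{j_1,\dots,j_k}\mathrm{Tr}_{\mathcal H_M}(\Gamma\,a_{i_1}\cdots a_{i_k}a^*_{j_k}\cdots a^*_{j_1})\,a^*_{i_1}\cdots a^*_{i_k}a_{j_k}\cdots a_{j_1}$ restricted to $\mathcal H_k$. For a unit vector $\psi\in\mathcal H_M$ and $0\le j\le M$, the $j$-particle reduced density matrix is the operator on $\mathcal H_j$ given by $\gamma^{(j)}_\psi=\frac{M!}{(M-j)!}\mathrm{Tr}_{M-j}|\psi\rangle\langle\psi|$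 (partial trace over the last $M-j$ tensor factors), so $\mathrm{Tr}\,\gamma^{(j)}_\psi=\frac{M!}{(M-j)!}$ and $\gamma^{(0)}_\psi=1$; for $j>M$, $\gamma^{(j)}_\psi=0$. *)

theory Defs
  imports Complex_Main "HOL-Combinatorics.Permutations"
begin

text \<open>A basis of (C^N)^{tensor n} is indexed by lists of length n with
entries in {0..<N}. A vector of the (full tensor) Fock space is a function nat list => complex;
its component in (C^N)^{tensor n} is its restriction to idx N n. Operators are linear maps
on such functions.\<close>

definition idx :: "nat \<Rightarrow> nat \<Rightarrow> nat list set" where
  "idx N n = {xs. length xs = n \<and> set xs \<subseteq> {..<N}}"

text \<open>Symmetrizing projection P_n, acting on the degree-(length xs) component.\<close>
definition symP :: "(nat list \<Rightarrow> complex) \<Rightarrow> nat list \<Rightarrow> complex" where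
  "symP f xs = (\<Sum>\<sigma>\<in>{\<sigma>. \<sigma> permutes {..<length xs}}.
                  f (map (\<lambda>i. xs ! \<sigma> i) [0..<length xs])) / of_nat (fact (length xs))"

text \<open>phi is a vector of H_n = P_n (C^N)^{tensor n}.\<close>
definition inH :: "nat \<Rightarrow> nat \<Rightarrow> (nat list \<Rightarrow> complex) \<Rightarrow> bool" where
  "inH N n \<phi> \<longleftrightarrow> (\<forall>xs\<in>idx N n. symP \<phi> xs = \<phi> xs) \<and> (\<forall>xs. xs \<notin> idx N n \<longrightarrow> \<phi> xs = 0)"

definition inner :: "nat \<Rightarrow> nat \<Rightarrow> (nat list \<Rightarrow> complex) \<Rightarrow> (nat list \<Rightarrow> complex) \<Rightarrow> complex" where
  "inner N n f g = (\<Sum>xs\<in>idx N n. cnj (f xs) * g xs)"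

definition unitH :: "nat \<Rightarrow> nat \<Rightarrow> (nat list \<Rightarrow> complex) \<Rightarrow> bool" where
  "unitH N n \<psi> \<longleftrightarrow> inH N n \<psi> \<and> (\<Sum>xs\<in>idx N n. (cmod (\<psi> xs))\<^sup>2) = 1"

text \<open>Creation operator a^*(e_i): a^* phi = sqrt(n+1) P_{n+1}(e_i tensor phi).\<close>
definition adag :: "nat \<Rightarrow> (nat list \<Rightarrow> complex) \<Rightarrow> nat list \<Rightarrow> complex" where
  "adag i f xs = (if xs = [] then 0 else
      complex_of_real (sqrt (real (length xs))) *
      symP (\<lambda>ys. if ys \<noteq> [] \<and> hd ys = i then f (tl ys) else 0) xs)"

text \<open>Annihilation operator a(e_i), the adjoint of adag i on the bosonic Fock space:
(a_i phi)(xs) = sqrt(n+1) phi(i # xs) for phi in H_{n+1}.\<close>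
definition ann :: "nat \<Rightarrow> (nat list \<Rightarrow> complex) \<Rightarrow> nat list \<Rightarrow> complex" where
  "ann i f xs = complex_of_real (sqrt (real (length xs + 1))) * f (i # xs)"

definition compose :: "(('a \<Rightarrow> 'a)) list \<Rightarrow> 'a \<Rightarrow> 'a" where
  "compose ops = foldr (\<circ>) ops id"

definition delta :: "nat list \<Rightarrow> nat list \<Rightarrow> complex" where
  "delta xs = (\<lambda>ys. if ys = xs then 1 else 0)"

text \<open>Trace over H_M of an operator T preserving H_M: Tr_{(C^N)^{tensor M}}(T P_M).\<close>
definition trH :: "nat \<Rightarrow> nat \<Rightarrow> ((nat list \<Rightarrow> complex) \<Rightarrow> nat list \<Rightarrow> complex) \<Rightarrow> complex" where
  "trH N M T = (\<Sum>xs\<in>idx N M. T (symP (delta xs)) xs)"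

definition proj :: "nat \<Rightarrow> nat \<Rightarrow> (nat list \<Rightarrow> complex) \<Rightarrow> (nat list \<Rightarrow> complex) \<Rightarrow> nat list \<Rightarrow> complex" where
  "proj N M \<psi> g = (\<lambda>xs. inner N M \<psi> g * \<psi> xs)"

text \<open>W_k(Gamma) (to be evaluated on H_k): 
 1/k! sum_{is,js} Tr_{H_M}(Gamma a_{i1}..a_{ik} a*_{jk}..a*_{j1}) a*_{i1}..a*_{ik} a_{jk}..a_{j1}.\<close>
definition W :: "nat \<Rightarrow> nat \<Rightarrow> nat \<Rightarrow> ((nat list \<Rightarrow> complex) \<Rightarrow> nat list \<Rightarrow> complex)
                   \<Rightarrow> (nat list \<Rightarrow> complex) \<Rightarrow> nat list \<Rightarrow> complex" where
  "W N M k \<Gamma> \<phi> = (\<lambda>xs. (\<Sum>is\<in>idx N k. \<Sum>js\<in>idx N k.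
      trH N M (\<Gamma> \<circ> compose (map ann is @ map adag (rev js))) *
      compose (map adag is @ map ann (rev js)) \<phi> xs) / of_nat (fact k))"

text \<open>Reduced density matrix gamma^{(j)}_psi = M!/(M-j)! Tr_{M-j} |psi><psi| (0 for j > M),
as an operator on (C^N)^{tensor j}.\<close>
definition rdm :: "nat \<Rightarrow> nat \<Rightarrow> (nat list \<Rightarrow> complex) \<Rightarrow> nat \<Rightarrow> (nat list \<Rightarrow> complex) \<Rightarrow> nat list \<Rightarrow> complex" where
  "rdm N M \<psi> j g = (\<lambda>xs. if j \<le> M then
      of_nat (fact M) / of_nat (fact (M - j)) *
      (\<Sum>ys\<in>idx N j. (\<Sum>zs\<in>idx N (M - j). \<psi> (xs @ zs) * cnj (\<psi> (ys @ zs))) * g ys)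
    else 0)"

text \<open>I^{tensor l} tensor T, acting on (C^N)^{tensor (l + m)}.\<close>
definition tensorI :: "nat \<Rightarrow> ((nat list \<Rightarrow> complex) \<Rightarrow> nat list \<Rightarrow> complex)
                        \<Rightarrow> (nat list \<Rightarrow> complex) \<Rightarrow> nat list \<Rightarrow> complex" where
  "tensorI l T g = (\<lambda>xs. T (\<lambda>ys. g (take l xs @ ys)) (drop l xs))"

definition Tpow :: "nat \<Rightarrow> nat \<Rightarrow> ((nat list \<Rightarrow> complex) \<Rightarrow> nat list \<Rightarrow> complex)
                      \<Rightarrow> (nat list \<Rightarrow> complex) \<Rightarrow> nat list \<Rightarrow> complex" where
  "Tpow k l \<Gamma> \<phi> = (\<lambda>xs. of_nat (fact k) / of_nat (fact (k - l)) *
      symP (tensorI l \<Gamma> (symP \<phi>)) xs)"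

end

theory Submission
  imports Defs
begin
lemma symP_alt: "symP f xs = (\<Sum>\<sigma>\<in>{\<sigma>. \<sigma> permutes {..<length xs}}. f (permute_list \<sigma> xs)) / of_nat (fact (length xs))"
  unfolding symP_def permute_list_def by simp

lemma finite_perms: "finite {\<sigma>. \<sigma> permutes {..<n::nat}}"
  by (rule finite_permutations) simp

lemma card_perms: "card {\<sigma>. \<sigma> permutes {..<n::nat}} = fact n"
  by (rule card_permutations) auto

definition msym :: "(nat list \<Rightarrow> complex) \<Rightarrow> bool" where
  "msym f \<longleftrightarrow> (\<forall>xs ys. mset xs = mset ys \<longrightarrow> f xs = f ys)"

lemma symP_permute:
  assumes "p permutes {..<length ys}"
  shows "symP f (permute_list p ys) = symP f ys"
proof -
  have "(\<Sum>\<sigma>\<in>{\<sigma>. \<sigma> permutes {..<length ys}}. f (permute_list \<sigma> (permute_list p ys)))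
      = (\<Sum>\<sigma>\<in>{\<sigma>. \<sigma> permutes {..<length ys}}. f (permute_list (p \<circ> \<sigma>) ys))"
    by (intro sum.cong refl) (simp add: permute_list_compose)
  also have "\<dots> = (\<Sum>\<sigma>\<in>{\<sigma>. \<sigma> permutes {..<length ys}}. f (permute_list \<sigma> ys))"
    using setum_permutations_compose_left[OF assms, of "\<lambda>\<sigma>. f (permute_list \<sigma> ys)"] by simp
  finally show ?thesis by (simp add: symP_alt)
qed

lemma symP_mset:
  assumes "mset xs = mset ys"
  shows "symP f xs = symP f ys"
proof -
  obtain p where "p permutes {..<length ys}" "permute_list p ys = xs"
    using mset_eq_permutation[OF assms] by metis
  thus ?thesis using symP_permute by metis
qed

lemma msym_symP: "msym (symP f)"
  unfolding msym_def using symP_mset by blast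

lemma symP_msym:
  assumes "msym f"
  shows "symP f xs = f xs"
proof -
  have "(\<Sum>\<sigma>\<in>{\<sigma>. \<sigma> permutes {..<length xs}}. f (permute_list \<sigma> xs))
      = (\<Sum>\<sigma>\<in>{\<sigma>. \<sigma> permutes {..<length xs}}. f xs)"
  proof (intro sum.cong refl)
    fix \<sigma> assume "\<sigma> \<in> {\<sigma>. \<sigma> permutes {..<length xs}}"
    hence "mset (permute_list \<sigma> xs) = mset xs" by simp
    thus "f (permute_list \<sigma> xs) = f xs" using assms unfolding msym_def by blast
  qed
  also have "\<dots> = of_nat (fact (length xs)) * f xs" by (simp add: card_perms)
  finally show ?thesis by (simp add: symP_alt)
qed

lemma symP_cong:
  assumes "\<And>ys. mset ys = mset xs \<Longrightarrow> f ys = g ys"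
  shows "symP f xs = symP g xs"
proof -
  have "(\<Sum>\<sigma>\<in>{\<sigma>. \<sigma> permutes {..<length xs}}. f (permute_list \<sigma> xs)) =
        (\<Sum>\<sigma>\<in>{\<sigma>. \<sigma> permutes {..<length xs}}. g (permute_list \<sigma> xs))"
    by (rule sum.cong[OF refl], rule assms) simp
  thus ?thesis unfolding symP_alt by simp
qed

lemma idx_mset:
  assumes "mset xs = mset ys"
  shows "xs \<in> idx N n \<longleftrightarrow> ys \<in> idx N n"
proof -
  have "length xs = length ys" "set xs = set ys"
    using mset_eq_length[OF assms] mset_eq_setD[OF assms] by blast+
  thus ?thesis unfolding idx_def by simp
qed

lemma inH_msym:
  assumes "inH N n \<phi>"
  shows "msym \<phi>"
  unfolding msym_def
proof (intro allI impI)
  fix xs ys :: "nat list" assume m: "mset xs = mset ys"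
  show "\<phi> xs = \<phi> ys"
  proof (cases "xs \<in> idx N n")
    case True
    hence "ys \<in> idx N n" using idx_mset[OF m] by simp
    have "\<phi> xs = symP \<phi> xs" "\<phi> ys = symP \<phi> ys"
      using True \<open>ys \<in> idx N n\<close> assms unfolding inH_def by auto
    thus ?thesis using symP_mset[OF m, of \<phi>] by simp
  next
    case False
    hence "ys \<notin> idx N n" using idx_mset[OF m] by simp
    thus ?thesis using False assms unfolding inH_def by simp
  qed
qed

definition lin :: "((nat list \<Rightarrow> complex) \<Rightarrow> nat list \<Rightarrow> complex) \<Rightarrow> bool" where
  "lin X \<longleftrightarrow> (\<forall>(S::nat list set) c f. finite S \<longrightarrow>
      X (\<lambda>w. \<Sum>x\<in>S. c x * f x w) = (\<lambda>w. \<Sum>x\<in>S. c x * X (f x) w))"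

lemma lin_symP: "lin symP"
  unfolding lin_def
proof (intro allI impI ext)
  fix S :: "nat list set" and c :: "nat list \<Rightarrow> complex"
    and f :: "nat list \<Rightarrow> nat list \<Rightarrow> complex" and w :: "nat list" assume "finite S"
  have "(\<Sum>\<sigma>\<in>{\<sigma>. \<sigma> permutes {..<length w}}. \<Sum>x\<in>S. c x * f x (permute_list \<sigma> w))
     = (\<Sum>x\<in>S. c x * (\<Sum>\<sigma>\<in>{\<sigma>. \<sigma> permutes {..<length w}}. f x (permute_list \<sigma> w)))"
    by (subst sum.swap) (simp add: sum_distrib_left mult.assoc)
  hence "symP (\<lambda>w. \<Sum>x\<in>S. c x * f x w) w = (\<Sum>x\<in>S. c x * (\<Sum>\<sigma>\<in>{\<sigma>. \<sigma> permutes {..<length w}}. f x (permute_list \<sigma> w))) / of_nat (fact (length w))"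
    unfolding symP_alt by simp
  also have "\<dots> = (\<Sum>x\<in>S. c x * ((\<Sum>\<sigma>\<in>{\<sigma>. \<sigma> permutes {..<length w}}. f x (permute_list \<sigma> w)) / of_nat (fact (length w))))"
    by (simp add: sum_divide_distrib[symmetric])
  finally show "symP (\<lambda>w. \<Sum>x\<in>S. c x * f x w) w = (\<Sum>x\<in>S. c x * symP (f x) w)"
    unfolding symP_alt .
qed

lemma compose_Nil[simp]: "compose [] = id" by (simp add: compose_def)
lemma compose_Cons[simp]: "compose (x # xs) = x \<circ> compose xs" by (simp add: compose_def)
lemma compose_append: "compose (xs @ ys) = compose xs \<circ> compose ys"
  by (induction xs) auto

definition cf :: "nat \<Rightarrow> nat \<Rightarrow> real" where
  "cf p q = sqrt (fact (p + q) / fact p)"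

lemma cf_0[simp]: "cf p 0 = 1" by (simp add: cf_def)

lemma cf_step1: "sqrt (real (Suc p)) * cf (Suc p) q = cf p (Suc q)"
proof -
  have e1: "fact (Suc p + q) = (fact (p + Suc q) :: real)" by simp
  have e2: "fact (Suc p) = real (Suc p) * (fact p :: real)" by simp
  have "real (Suc p) * (fact (Suc p + q) / fact (Suc p)) = fact (p + Suc q) / fact p"
    unfolding e1 e2 by (simp add: field_simps del: of_nat_Suc)
  thus ?thesis unfolding cf_def by (metis real_sqrt_mult)
qed

lemma cf_step2: "sqrt (real (p + Suc q)) * cf p q = cf p (Suc q)"
proof -
  have e1: "fact (p + Suc q) = real (p + Suc q) * (fact (p + q) :: real)"
    by (metis add_Suc_right fact_Suc of_nat_fact of_nat_mult)
  show ?thesis unfolding cf_def e1 by (metis real_sqrt_mult times_divide_eq_right)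
qed

lemma ann_chain:
  "compose (map ann is) g zs = complex_of_real (cf (length zs) (length is)) * g (rev is @ zs)"
proof (induction "is" arbitrary: zs)
  case Nil thus ?case by simp
next
  case (Cons i "is")
  have "compose (map ann (i # is)) g zs = ann i (compose (map ann is) g) zs" by simp
  also have "\<dots> = complex_of_real (sqrt (real (Suc (length zs)))) *
      (complex_of_real (cf (Suc (length zs)) (length is)) * g (rev is @ i # zs))"
    unfolding ann_def Cons by simp
  also have "\<dots> = complex_of_real (sqrt (real (Suc (length zs))) * cf (Suc (length zs)) (length is))
       * g (rev (i # is) @ zs)" by simp
  also have "\<dots> = complex_of_real (cf (length zs) (length (i # is))) * g (rev (i # is) @ zs)"
    using cf_step1 by simp
  finally show ?case .
qed

lemma symP_scale: "symP (\<lambda>ys. c * f ys) xs = c * symP f xs"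
  unfolding symP_alt by (simp add: sum_distrib_left)

definition shift0 :: "(nat \<Rightarrow> nat) \<Rightarrow> nat \<Rightarrow> nat" where
  "shift0 \<tau> = (\<lambda>i. if i = 0 then 0 else Suc (\<tau> (i - 1)))"

lemma shift0_permutes:
  assumes "\<tau> permutes {..<n}"
  shows "shift0 \<tau> permutes {..<Suc n}"
proof -
  define \<tau>' where "\<tau>' = inv \<tau>"
  have t': "\<tau>' permutes {..<n}" using permutes_inv[OF assms] by (simp add: \<tau>'_def)
  have a: "\<tau> (\<tau>' x) = x" "\<tau>' (\<tau> x) = x" for x
    unfolding \<tau>'_def using permutes_inverses[OF assms] by auto
  have "bij (shift0 \<tau>)"
  proof (rule bij_betw_byWitness[where f'="shift0 \<tau>'"])
    show "\<forall>a\<in>UNIV. shift0 \<tau>' (shift0 \<tau> a) = a" by (auto simp: shift0_def a)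
    show "\<forall>a'\<in>UNIV. shift0 \<tau> (shift0 \<tau>' a') = a'" by (auto simp: shift0_def a)
  qed auto
  moreover have "shift0 \<tau> x = x" if "x \<notin> {..<Suc n}" for x
    using that permutes_not_in[OF assms, of "x - 1"] by (auto simp: shift0_def)
  moreover have "\<forall>y. \<exists>!x. shift0 \<tau> x = y" using \<open>bij (shift0 \<tau>)\<close> bij_iff[of "shift0 \<tau>"] by simp
  ultimately show ?thesis unfolding permutes_def by simp
qed

lemma permute_list_shift0:
  assumes "\<tau> permutes {..<length ys}"
  shows "permute_list (shift0 \<tau>) (y # ys) = y # permute_list \<tau> ys"
proof -
  have "[0..<Suc (length ys)] = 0 # [Suc 0..<Suc (length ys)]" by (rule upt_conv_Cons) simp
  also have "[Suc 0..<Suc (length ys)] = map Suc [0..<length ys]" by (simp add: map_Suc_upt)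
  finally have "[0..<Suc (length ys)] = 0 # map Suc [0..<length ys]" .
  hence "permute_list (shift0 \<tau>) (y # ys) = map (\<lambda>i. (y # ys) ! shift0 \<tau> i) (0 # map Suc [0..<length ys])"
    unfolding permute_list_def by simp
  also have "\<dots> = y # map (\<lambda>i. ys ! \<tau> i) [0..<length ys]"
    by (simp add: shift0_def)
  finally show ?thesis unfolding permute_list_def .
qed

lemma nested_symP:
  "symP (\<lambda>ys. if ys \<noteq> [] \<and> hd ys = i then symP h (tl ys) else 0) xs
   = symP (\<lambda>ys. if ys \<noteq> [] \<and> hd ys = i then h (tl ys) else 0) xs"
proof (cases xs)
  case Nil thus ?thesis by (simp add: symP_alt)
next
  case (Cons x xs')
  define n where "n = length xs'"
  define F where "F = (\<lambda>ys. if ys \<noteq> [] \<and> hd ys = i then h (tl ys) else 0)"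
  let ?P = "\<lambda>m. {\<sigma>. \<sigma> permutes {..<m::nat}}"
  have len: "length xs = Suc n" using Cons n_def by simp
  have step1: "(if ws \<noteq> [] \<and> hd ws = i then symP h (tl ws) else 0)
       = (\<Sum>\<tau>\<in>?P n. F (permute_list (shift0 \<tau>) ws)) / of_nat (fact n)"
    if "length ws = Suc n" for ws
  proof -
    obtain w ws' where ws: "ws = w # ws'" using \<open>length ws = Suc n\<close> by (cases ws) auto
    have lws': "length ws' = n" using that ws by simp
    have "(\<Sum>\<tau>\<in>?P n. F (permute_list (shift0 \<tau>) ws)) = (\<Sum>\<tau>\<in>?P n. if w = i then h (permute_list \<tau> ws') else 0)"
      by (intro sum.cong refl) (simp add: ws permute_list_shift0 lws' F_def)
    thus ?thesis using lws' by (simp add: ws symP_alt)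
  qed
  have "(\<Sum>\<sigma>\<in>?P (Suc n). if permute_list \<sigma> xs \<noteq> [] \<and> hd (permute_list \<sigma> xs) = i
             then symP h (tl (permute_list \<sigma> xs)) else 0)
      = (\<Sum>\<sigma>\<in>?P (Suc n). (\<Sum>\<tau>\<in>?P n. F (permute_list (shift0 \<tau>) (permute_list \<sigma> xs))) / of_nat (fact n))"
    by (intro sum.cong refl step1) (simp add: len)
  also have "\<dots> = (\<Sum>\<tau>\<in>?P n. \<Sum>\<sigma>\<in>?P (Suc n). F (permute_list (\<sigma> \<circ> shift0 \<tau>) xs)) / of_nat (fact n)"
  proof -
    have "F (permute_list (shift0 \<tau>) (permute_list \<sigma> xs)) = F (permute_list (\<sigma> \<circ> shift0 \<tau>) xs)"
      if "\<tau> \<in> ?P n" for \<sigma> \<tau>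
      using permute_list_compose[of "shift0 \<tau>" xs \<sigma>] shift0_permutes[of \<tau> n] that len by simp
    thus ?thesis by (simp add: sum_divide_distrib[symmetric]) (subst sum.swap, simp)
  qed
  also have "\<dots> = (\<Sum>\<tau>\<in>?P n. \<Sum>\<sigma>\<in>?P (Suc n). F (permute_list \<sigma> xs)) / of_nat (fact n)"
  proof -
    have "(\<Sum>\<sigma>\<in>?P (Suc n). F (permute_list (\<sigma> \<circ> shift0 \<tau>) xs)) = (\<Sum>\<sigma>\<in>?P (Suc n). F (permute_list \<sigma> xs))"
      if "\<tau> \<in> ?P n" for \<tau>
      using sum_permutations_compose_right[OF shift0_permutes[of \<tau> n], of "\<lambda>\<sigma>. F (permute_list \<sigma> xs)"] that
      by simp
    thus ?thesis by simp
  qed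
  also have "\<dots> = (\<Sum>\<sigma>\<in>?P (Suc n). F (permute_list \<sigma> xs))"
    by (simp add: card_perms)
  finally show ?thesis unfolding symP_alt len F_def by simp
qed

lemma msym_take_drop:
  assumes "msym g" shows "symP g xs = g xs" using symP_msym[OF assms] .

lemma adag_chain:
  assumes "msym g" and "length xs = p + length is"
  shows "compose (map adag is) g xs = complex_of_real (cf p (length is)) *
     symP (\<lambda>ys. if take (length is) ys = is then g (drop (length is) ys) else 0) xs"
  using assms(2)
proof (induction "is" arbitrary: xs)
  case Nil thus ?case using symP_msym[OF assms(1)] by simp
next
  case (Cons i "is")
  let ?q = "length is"
  let ?D = "\<lambda>ys. if take ?q ys = is then g (drop ?q ys) else 0"
  have ne: "xs \<noteq> []" using Cons.prems by auto
  have "compose (map adag (i # is)) g xs = adag i (compose (map adag is) g) xs" by simp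
  also have "\<dots> = complex_of_real (sqrt (real (length xs))) *
     symP (\<lambda>ys. if ys \<noteq> [] \<and> hd ys = i then compose (map adag is) g (tl ys) else 0) xs"
    using ne by (simp add: adag_def)
  also have "symP (\<lambda>ys. if ys \<noteq> [] \<and> hd ys = i then compose (map adag is) g (tl ys) else 0) xs
     = symP (\<lambda>ys. complex_of_real (cf p ?q) * (if ys \<noteq> [] \<and> hd ys = i then symP ?D (tl ys) else 0)) xs"
  proof (rule symP_cong)
    fix ys assume "mset ys = mset xs"
    hence "length ys = length xs" by (metis mset_eq_length)
    hence "length (tl ys) = p + ?q" using Cons.prems by simp
    thus "(if ys \<noteq> [] \<and> hd ys = i then compose (map adag is) g (tl ys) else 0) =
          complex_of_real (cf p ?q) * (if ys \<noteq> [] \<and> hd ys = i then symP ?D (tl ys) else 0)"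
      using Cons.IH by simp
  qed
  also have "\<dots> = complex_of_real (cf p ?q) * symP (\<lambda>ys. if ys \<noteq> [] \<and> hd ys = i then ?D (tl ys) else 0) xs"
    by (simp add: symP_scale nested_symP)
  also have "symP (\<lambda>ys. if ys \<noteq> [] \<and> hd ys = i then ?D (tl ys) else 0) xs
     = symP (\<lambda>ys. if take (length (i # is)) ys = i # is then g (drop (length (i # is)) ys) else 0) xs"
  proof (rule symP_cong)
    fix ys :: "nat list"
    show "(if ys \<noteq> [] \<and> hd ys = i then ?D (tl ys) else 0) =
      (if take (length (i # is)) ys = i # is then g (drop (length (i # is)) ys) else 0)"
      by (cases ys) auto
  qed
  finally have "compose (map adag (i # is)) g xs = complex_of_real (sqrt (real (length xs))) *
     (complex_of_real (cf p ?q) * symP (\<lambda>ys. if take (length (i # is)) ys = i # is then g (drop (length (i # is)) ys) else 0) xs)" .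
  moreover have "complex_of_real (sqrt (real (length xs))) * (complex_of_real (cf p ?q) * X)
     = complex_of_real (cf p (length (i # is))) * X" for X
    using cf_step2[of p ?q] Cons.prems by (simp add: mult.assoc[symmetric] of_real_mult[symmetric] del: of_real_mult)
  ultimately show ?case by simp
qed

lemma finite_idx[simp]: "finite (idx N n)"
proof -
  have "idx N n = {xs. set xs \<subseteq> {..<N} \<and> length xs = n}" unfolding idx_def by auto
  thus ?thesis using finite_lists_length_eq[of "{..<N}" n] by simp
qed

lemma lin_ann: "lin (ann i)"
  unfolding lin_def ann_def by (auto simp: sum_distrib_left mult.left_commute)

lemma lin_adag: "lin (adag i)"
  unfolding lin_def
proof (intro allI impI ext)
  fix S :: "nat list set" and c :: "nat list \<Rightarrow> complex"
    and f :: "nat list \<Rightarrow> nat list \<Rightarrow> complex" and w :: "nat list" assume fin: "finite S"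
  have "(\<lambda>ys. if ys \<noteq> [] \<and> hd ys = i then \<Sum>x\<in>S. c x * f x (tl ys) else 0)
      = (\<lambda>ys. \<Sum>x\<in>S. c x * (if ys \<noteq> [] \<and> hd ys = i then f x (tl ys) else 0))"
    by auto
  hence "symP (\<lambda>ys. if ys \<noteq> [] \<and> hd ys = i then \<Sum>x\<in>S. c x * f x (tl ys) else 0) w
      = (\<Sum>x\<in>S. c x * symP (\<lambda>ys. if ys \<noteq> [] \<and> hd ys = i then f x (tl ys) else 0) w)"
    using fun_cong[OF lin_symP[unfolded lin_def, rule_format, OF fin,
       of c "\<lambda>x ys. if ys \<noteq> [] \<and> hd ys = i then f x (tl ys) else 0"], of w]
    by simp
  thus "adag i (\<lambda>w. \<Sum>x\<in>S. c x * f x w) w = (\<Sum>x\<in>S. c x * adag i (f x) w)"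
    unfolding adag_def by (simp add: sum_distrib_left mult.left_commute)
qed

lemma lin_compose: "(\<forall>X\<in>set ops. lin X) \<Longrightarrow> lin (compose ops)"
proof (induction ops)
  case Nil thus ?case by (simp add: lin_def)
next
  case (Cons X ops)
  hence l1: "lin X" and l2: "lin (compose ops)" by auto
  show ?case unfolding lin_def
  proof (intro allI impI)
    fix S :: "nat list set" and c f assume "finite S"
    have "compose (X # ops) (\<lambda>w. \<Sum>x\<in>S. c x * f x w) = X (compose ops (\<lambda>w. \<Sum>x\<in>S. c x * f x w))"
      by simp
    also have "\<dots> = X (\<lambda>w. \<Sum>x\<in>S. c x * compose ops (f x) w)"
      by (simp only: l2[unfolded lin_def, rule_format, OF \<open>finite S\<close>])
    also have "\<dots> = (\<lambda>w. \<Sum>x\<in>S. c x * X (compose ops (f x)) w)"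
      by (rule l1[unfolded lin_def, rule_format, OF \<open>finite S\<close>])
    finally show "compose (X # ops) (\<lambda>w. \<Sum>x\<in>S. c x * f x w) = (\<lambda>w. \<Sum>x\<in>S. c x * compose (X # ops) (f x) w)"
      by simp
  qed
qed

lemma psi_expand:
  assumes "inH N M \<psi>"
  shows "(\<lambda>w. \<Sum>xs\<in>idx N M. \<psi> xs * symP (delta xs) w) = \<psi>"
proof
  fix w
  have "(\<Sum>xs\<in>idx N M. \<psi> xs * symP (delta xs) w) = symP (\<lambda>ys. \<Sum>xs\<in>idx N M. \<psi> xs * delta xs ys) w"
  proof -
    have "symP (\<lambda>ys. \<Sum>xs\<in>idx N M. \<psi> xs * delta xs ys) = (\<lambda>w. \<Sum>xs\<in>idx N M. \<psi> xs * symP (delta xs) w)"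
      by (rule lin_symP[unfolded lin_def, rule_format, OF finite_idx])
    thus ?thesis by simp
  qed
  also have "(\<lambda>ys. \<Sum>xs\<in>idx N M. \<psi> xs * delta xs ys) = \<psi>"
  proof
    fix ys
    have "(\<Sum>xs\<in>idx N M. \<psi> xs * delta xs ys) = (\<Sum>xs\<in>idx N M. if ys = xs then \<psi> ys else 0)"
      by (intro sum.cong refl) (auto simp: delta_def)
    also have "\<dots> = (if ys \<in> idx N M then \<psi> ys else 0)" by simp
    also have "\<dots> = \<psi> ys" using assms unfolding inH_def by auto
    finally show "(\<Sum>xs\<in>idx N M. \<psi> xs * delta xs ys) = \<psi> ys" .
  qed
  also have "symP \<psi> w = \<psi> w" using symP_msym[OF inH_msym[OF assms]] .
  finally show "(\<Sum>xs\<in>idx N M. \<psi> xs * symP (delta xs) w) = \<psi> w" .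
qed

lemma trace_lemma:
  assumes "inH N M \<psi>" and "lin X"
  shows "trH N M (proj N M \<psi> \<circ> X) = inner N M \<psi> (X \<psi>)"
proof -
  have "X \<psi> = X (\<lambda>w. \<Sum>xs\<in>idx N M. \<psi> xs * symP (delta xs) w)" by (simp only: psi_expand[OF assms(1)])
  also have "\<dots> = (\<lambda>w. \<Sum>xs\<in>idx N M. \<psi> xs * X (symP (delta xs)) w)"
    by (rule assms(2)[unfolded lin_def, rule_format, OF finite_idx])
  finally have eq: "X \<psi> = (\<lambda>w. \<Sum>xs\<in>idx N M. \<psi> xs * X (symP (delta xs)) w)" .
  have "inner N M \<psi> (X \<psi>) = (\<Sum>zs\<in>idx N M. \<Sum>xs\<in>idx N M. cnj (\<psi> zs) * (\<psi> xs * X (symP (delta xs)) zs))"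
    unfolding inner_def eq by (simp add: sum_distrib_left)
  also have "\<dots> = (\<Sum>xs\<in>idx N M. inner N M \<psi> (X (symP (delta xs))) * \<psi> xs)"
  proof -
    have "(\<Sum>zs\<in>idx N M. \<Sum>xs\<in>idx N M. cnj (\<psi> zs) * (\<psi> xs * X (symP (delta xs)) zs))
       = (\<Sum>xs\<in>idx N M. \<Sum>zs\<in>idx N M. cnj (\<psi> zs) * X (symP (delta xs)) zs * \<psi> xs)"
      by (subst sum.swap) (rule sum.cong[OF refl], rule sum.cong[OF refl], simp only: ac_simps)
    thus ?thesis unfolding inner_def sum_distrib_right .
  qed
  also have "\<dots> = trH N M (proj N M \<psi> \<circ> X)"
    unfolding trH_def proj_def o_def by (rule refl)
  finally show ?thesis by (rule sym)
qed

lemma cf_sq: "cf p q * cf p q = fact (p + q) / fact p"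
  unfolding cf_def by simp

lemma Y_eval:
  assumes "inH N k \<phi>" and "length xs = k" and "length I = k" and "length J = k"
  shows "compose (map adag I @ map ann (rev J)) \<phi> xs = of_nat (fact k) * \<phi> J * symP (delta I) xs"
proof -
  define g where "g = compose (map ann (rev J)) \<phi>"
  have g: "g w = complex_of_real (cf (length w) k) * \<phi> (J @ w)" for w
    unfolding g_def ann_chain using assms(4) by simp
  have gz: "g w = 0" if "w \<noteq> []" for w
  proof -
    have "J @ w \<notin> idx N k" using that assms(4) unfolding idx_def by auto
    thus ?thesis using assms(1) g unfolding inH_def by simp
  qed
  have "msym g" unfolding msym_def
  proof (intro allI impI)
    fix w w' :: "nat list" assume "mset w = mset w'"
    hence l: "length w = length w'" by (rule mset_eq_length)
    show "g w = g w'"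
    proof (cases "w = []")
      case True thus ?thesis using l by simp
    next
      case False
      hence "w' \<noteq> []" using l by auto
      thus ?thesis using gz False by simp
    qed
  qed
  have "compose (map adag I @ map ann (rev J)) \<phi> xs = compose (map adag I) g xs"
    unfolding compose_append g_def by simp
  also have "\<dots> = complex_of_real (cf 0 k) *
     symP (\<lambda>ys. if take k ys = I then g (drop k ys) else 0) xs"
    using adag_chain[OF \<open>msym g\<close>, of xs 0 I, unfolded assms(3)] assms by simp
  also have "symP (\<lambda>ys. if take k ys = I then g (drop k ys) else 0) xs
      = symP (\<lambda>ys. (complex_of_real (cf 0 k) * \<phi> J) * delta I ys) xs"
  proof (rule symP_cong)
    fix ys assume "mset ys = mset xs"
    hence "length ys = k" using assms(2) by (metis mset_eq_length)
    thus "(if take k ys = I then g (drop k ys) else 0) = (complex_of_real (cf 0 k) * \<phi> J) * delta I ys"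
      using assms(3) by (auto simp: g delta_def)
  qed
  also have "\<dots> = (complex_of_real (cf 0 k) * \<phi> J) * symP (delta I) xs"
    by (rule symP_scale)
  finally have "compose (map adag I @ map ann (rev J)) \<phi> xs =
      complex_of_real (cf 0 k * cf 0 k) * \<phi> J * symP (delta I) xs" by (simp add: mult.assoc)
  thus ?thesis by (simp add: cf_sq)
qed

lemma X_eval:
  assumes "msym \<psi>" and "length zs = M" and "length I = k" and "length J = k"
  shows "compose (map ann I @ map adag (rev J)) \<psi> zs =
    complex_of_real (fact (M + k) / fact M) *
    symP (\<lambda>ys. if take k ys = rev J then \<psi> (drop k ys) else 0) (rev I @ zs)"
proof -
  have "compose (map ann I @ map adag (rev J)) \<psi> zs = compose (map ann I) (compose (map adag (rev J)) \<psi>) zs"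
    unfolding compose_append by simp
  also have "\<dots> = complex_of_real (cf M k) * compose (map adag (rev J)) \<psi> (rev I @ zs)"
    unfolding ann_chain using assms by simp
  also have "\<dots> = complex_of_real (cf M k) * (complex_of_real (cf M k) *
    symP (\<lambda>ys. if take k ys = rev J then \<psi> (drop k ys) else 0) (rev I @ zs))"
    using adag_chain[OF assms(1), of "rev I @ zs" M "rev J", unfolded length_rev assms(4)] assms by simp
  also have "\<dots> = complex_of_real (cf M k * cf M k) *
    symP (\<lambda>ys. if take k ys = rev J then \<psi> (drop k ys) else 0) (rev I @ zs)"
    by (simp only: of_real_mult mult.assoc)
  finally show ?thesis unfolding cf_sq .
qed

lemma idx_append: "xs \<in> idx N a \<Longrightarrow> ys \<in> idx N b \<Longrightarrow> xs @ ys \<in> idx N (a + b)"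
  unfolding idx_def by auto

lemma idx_rev: "xs \<in> idx N a \<Longrightarrow> rev xs \<in> idx N a"
  unfolding idx_def by auto

lemma step3:
  assumes "inH N k \<phi>" and w: "w \<in> idx N (k + M)"
  shows "(\<Sum>J\<in>idx N k. \<phi> J * symP (\<lambda>ys. if take k ys = rev J then \<psi> (drop k ys) else 0) w)
       = symP (\<lambda>ys. \<phi> (take k ys) * \<psi> (drop k ys)) w"
proof -
  have "symP (\<lambda>ys. \<Sum>J\<in>idx N k. \<phi> J * (if take k ys = rev J then \<psi> (drop k ys) else 0))
     = (\<lambda>w. \<Sum>J\<in>idx N k. \<phi> J * symP (\<lambda>ys. if take k ys = rev J then \<psi> (drop k ys) else 0) w)"
    by (rule lin_symP[unfolded lin_def, rule_format, OF finite_idx])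
  hence "(\<Sum>J\<in>idx N k. \<phi> J * symP (\<lambda>ys. if take k ys = rev J then \<psi> (drop k ys) else 0) w)
      = symP (\<lambda>ys. \<Sum>J\<in>idx N k. \<phi> J * (if take k ys = rev J then \<psi> (drop k ys) else 0)) w"
    by (metis (no_types, lifting))
  also have "\<dots> = symP (\<lambda>ys. \<phi> (take k ys) * \<psi> (drop k ys)) w"
  proof (rule symP_cong)
    fix ys assume m: "mset ys = mset w"
    have ys: "ys \<in> idx N (k + M)" using idx_mset[OF m] w by simp
    hence t: "rev (take k ys) \<in> idx N k" unfolding idx_def by (auto dest: in_set_takeD)
    have "(\<Sum>J\<in>idx N k. \<phi> J * (if take k ys = rev J then \<psi> (drop k ys) else 0))
        = (\<Sum>J\<in>idx N k. if rev (take k ys) = J then \<phi> J * \<psi> (drop k ys) else 0)"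
      by (intro sum.cong refl) auto
    also have "\<dots> = \<phi> (rev (take k ys)) * \<psi> (drop k ys)"
      using t by (simp add: sum.delta)
    also have "\<phi> (rev (take k ys)) = \<phi> (take k ys)"
      using inH_msym[OF assms(1)] unfolding msym_def by (metis mset_rev)
    finally show "(\<Sum>J\<in>idx N k. \<phi> J * (if take k ys = rev J then \<psi> (drop k ys) else 0))
        = \<phi> (take k ys) * \<psi> (drop k ys)" .
  qed
  finally show ?thesis .
qed

lemma step4:
  assumes "xs \<in> idx N k" and G: "\<And>I I'. mset I = mset I' \<Longrightarrow> G I = G I'"
  shows "(\<Sum>I\<in>idx N k. G I * symP (delta I) xs) = G xs"
proof -
  define G' where "G' = (\<lambda>ys. if ys \<in> idx N k then G ys else 0)"
  have "symP (\<lambda>ys. \<Sum>I\<in>idx N k. G I * delta I ys) = (\<lambda>w. \<Sum>I\<in>idx N k. G I * symP (delta I) w)"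
    by (rule lin_symP[unfolded lin_def, rule_format, OF finite_idx])
  hence "(\<Sum>I\<in>idx N k. G I * symP (delta I) xs) = symP (\<lambda>ys. \<Sum>I\<in>idx N k. G I * delta I ys) xs"
    by (metis (no_types, lifting))
  also have "(\<lambda>ys. \<Sum>I\<in>idx N k. G I * delta I ys) = G'"
  proof
    fix ys
    have "(\<Sum>I\<in>idx N k. G I * delta I ys) = (\<Sum>I\<in>idx N k. if ys = I then G ys else 0)"
      by (intro sum.cong refl) (auto simp: delta_def)
    thus "(\<Sum>I\<in>idx N k. G I * delta I ys) = G' ys" by (simp add: G'_def)
  qed
  also have "msym G'" unfolding msym_def
  proof (intro allI impI)
    fix a b :: "nat list" assume m: "mset a = mset b"
    show "G' a = G' b" unfolding G'_def using idx_mset[OF m] G[OF m] by simp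
  qed
  hence "symP G' xs = G' xs" by (rule symP_msym)
  also have "\<dots> = G xs" using assms(1) by (simp add: G'_def)
  finally show ?thesis .
qed

lemma W_formula:
  assumes psi: "inH N M \<psi>" and phi: "inH N k \<phi>" and xs: "xs \<in> idx N k"
  shows "W N M k (proj N M \<psi>) \<phi> xs = complex_of_real (fact (M + k) / fact M) *
     (\<Sum>zs\<in>idx N M. cnj (\<psi> zs) * symP (\<lambda>ys. \<phi> (take k ys) * \<psi> (drop k ys)) (xs @ zs))"
proof -
  define D where "D = complex_of_real (fact (M + k) / fact M)"
  define \<Phi> where "\<Phi> = (\<lambda>ys. \<phi> (take k ys) * \<psi> (drop k ys))"
  define \<Delta> where "\<Delta> = (\<lambda>J ys. if take k ys = rev J then \<psi> (drop k ys) else 0)"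
  define S where "S = (\<lambda>I J zs. symP (\<Delta> J) (rev I @ zs))"
  define s where "s = (\<lambda>I. symP (delta I) xs)"
  define G where "G = (\<lambda>I. \<Sum>zs\<in>idx N M. cnj (\<psi> zs) * symP \<Phi> (rev I @ zs))"
  define fk where "fk = (of_nat (fact k) :: complex)"
  have msp: "msym \<psi>" using inH_msym[OF psi] .
  have lenI: "length I = k" if "I \<in> idx N k" for I using that unfolding idx_def by simp
  have tr: "trH N M (proj N M \<psi> \<circ> compose (map ann I @ map adag (rev J)))
      = (\<Sum>zs\<in>idx N M. cnj (\<psi> zs) * (D * S I J zs))" if "I \<in> idx N k" "J \<in> idx N k" for I J
  proof -
    have "lin (compose (map ann I @ map adag (rev J)))"
      by (rule lin_compose) (auto simp: lin_ann lin_adag)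
    hence "trH N M (proj N M \<psi> \<circ> compose (map ann I @ map adag (rev J)))
        = inner N M \<psi> (compose (map ann I @ map adag (rev J)) \<psi>)"
      by (rule trace_lemma[OF psi])
    also have "\<dots> = (\<Sum>zs\<in>idx N M. cnj (\<psi> zs) * (D * S I J zs))"
      unfolding inner_def
    proof (rule sum.cong[OF refl])
      fix zs assume "zs \<in> idx N M"
      hence "length zs = M" unfolding idx_def by simp
      thus "cnj (\<psi> zs) * compose (map ann I @ map adag (rev J)) \<psi> zs = cnj (\<psi> zs) * (D * S I J zs)"
        using X_eval[OF msp _ lenI[OF that(1)] lenI[OF that(2)]] by (simp add: D_def S_def \<Delta>_def)
    qed
    finally show ?thesis .
  qed
  have Y: "compose (map adag I @ map ann (rev J)) \<phi> xs = fk * \<phi> J * s I"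
    if "I \<in> idx N k" "J \<in> idx N k" for I J
    using Y_eval[OF phi lenI[OF xs] lenI[OF that(1)] lenI[OF that(2)]] by (simp add: fk_def s_def)
  have "W N M k (proj N M \<psi>) \<phi> xs = (\<Sum>I\<in>idx N k. \<Sum>J\<in>idx N k.
      (\<Sum>zs\<in>idx N M. cnj (\<psi> zs) * (D * S I J zs)) * (fk * \<phi> J * s I)) / fk"
    unfolding W_def fk_def[symmetric] by (intro arg_cong2[where f="(/)"] sum.cong refl) (simp add: tr Y)
  also have "\<dots> = (\<Sum>I\<in>idx N k. \<Sum>J\<in>idx N k. fk * (D * s I * (\<Sum>zs\<in>idx N M. cnj (\<psi> zs) * (\<phi> J * S I J zs)))) / fk"
  proof -
    have "(\<Sum>zs\<in>idx N M. cnj (\<psi> zs) * (D * S I J zs)) * (fk * \<phi> J * s I)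
        = fk * (D * s I * (\<Sum>zs\<in>idx N M. cnj (\<psi> zs) * (\<phi> J * S I J zs)))" for I J
      by (simp add: sum_distrib_left sum_distrib_right ac_simps)
    thus ?thesis by (simp only:)
  qed
  also have "\<dots> = (\<Sum>I\<in>idx N k. \<Sum>J\<in>idx N k. D * s I * (\<Sum>zs\<in>idx N M. cnj (\<psi> zs) * (\<phi> J * S I J zs)))"
    by (simp add: sum_distrib_left[symmetric] fk_def)
  also have "\<dots> = (\<Sum>I\<in>idx N k. D * s I * G I)"
  proof (rule sum.cong[OF refl])
    fix I assume I: "I \<in> idx N k"
    have "(\<Sum>J\<in>idx N k. D * s I * (\<Sum>zs\<in>idx N M. cnj (\<psi> zs) * (\<phi> J * S I J zs)))
        = D * s I * (\<Sum>zs\<in>idx N M. cnj (\<psi> zs) * (\<Sum>J\<in>idx N k. \<phi> J * S I J zs))"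
      by (simp add: sum_distrib_left[symmetric]) (subst sum.swap, simp add: sum_distrib_left)
    also have "(\<Sum>zs\<in>idx N M. cnj (\<psi> zs) * (\<Sum>J\<in>idx N k. \<phi> J * S I J zs)) = G I"
      unfolding G_def
    proof (rule sum.cong[OF refl])
      fix zs assume "zs \<in> idx N M"
      hence "rev I @ zs \<in> idx N (k + M)" using idx_append[OF idx_rev[OF I]] by simp
      thus "cnj (\<psi> zs) * (\<Sum>J\<in>idx N k. \<phi> J * S I J zs) = cnj (\<psi> zs) * symP \<Phi> (rev I @ zs)"
        using step3[OF phi, of "rev I @ zs" M \<psi>] by (simp add: S_def \<Delta>_def \<Phi>_def)
    qed
    finally show "(\<Sum>J\<in>idx N k. D * s I * (\<Sum>zs\<in>idx N M. cnj (\<psi> zs) * (\<phi> J * S I J zs))) = D * s I * G I" .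
  qed
  also have "\<dots> = D * (\<Sum>I\<in>idx N k. G I * symP (delta I) xs)"
    by (simp add: sum_distrib_left s_def ac_simps)
  also have "(\<Sum>I\<in>idx N k. G I * symP (delta I) xs) = G xs"
  proof (rule step4[OF xs])
    fix I I' :: "nat list" assume m: "mset I = mset I'"
    have "symP \<Phi> (rev I @ zs) = symP \<Phi> (rev I' @ zs)" for zs
      by (rule symP_mset) (simp add: m)
    thus "G I = G I'" unfolding G_def by simp
  qed
  also have "G xs = (\<Sum>zs\<in>idx N M. cnj (\<psi> zs) * symP \<Phi> (xs @ zs))"
  proof -
    have "symP \<Phi> (rev xs @ zs) = symP \<Phi> (xs @ zs)" for zs by (rule symP_mset) simp
    thus ?thesis unfolding G_def by simp
  qed
  finally show ?thesis by (simp add: D_def \<Phi>_def)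
qed

definition sel :: "nat list \<Rightarrow> nat set \<Rightarrow> nat list" where
  "sel w S = map (nth w) (sorted_list_of_set S)"

lemma mset_sorted_set: "mset (sorted_list_of_set S) = mset_set S"
  by (metis mset_sorted_list_of_multiset sorted_list_of_mset_set)

lemma mset_sel: "mset (sel w S) = image_mset (nth w) (mset_set S)"
  unfolding sel_def by (simp add: mset_sorted_set)

lemma perm_exists:
  assumes "finite U" "A \<subseteq> U" "S \<subseteq> U" "card A = card S"
  shows "\<exists>\<rho>. \<rho> permutes U \<and> \<rho> ` A = S"
proof -
  have fA: "finite A" and fS: "finite S" using assms finite_subset by blast+
  obtain f where f: "bij_betw f A S" using finite_same_card_bij[OF fA fS assms(4)] by blast
  have "card (U - A) = card (U - S)"
    using assms fA fS by (simp add: card_Diff_subset)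
  then obtain g where g: "bij_betw g (U - A) (U - S)"
    using finite_same_card_bij[of "U - A" "U - S"] assms(1) by blast
  define \<rho> where "\<rho> = (\<lambda>x. if x \<in> A then f x else if x \<in> U then g x else x)"
  have b1: "bij_betw \<rho> A S" using f by (rule bij_betw_cong[THEN iffD1, rotated]) (simp add: \<rho>_def)
  have b2: "bij_betw \<rho> (U - A) (U - S)" using g by (rule bij_betw_cong[THEN iffD1, rotated]) (simp add: \<rho>_def)
  have "bij_betw \<rho> (A \<union> (U - A)) (S \<union> (U - S))" by (rule bij_betw_combine[OF b1 b2]) blast
  moreover have "A \<union> (U - A) = U" "S \<union> (U - S) = U" using assms by blast+
  ultimately have "bij_betw \<rho> U U" by simp
  moreover have "\<rho> x = x" if "x \<notin> U" for x using that assms(2) by (auto simp: \<rho>_def)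
  ultimately have "\<rho> permutes U" by (rule bij_imp_permutes)
  moreover have "\<rho> ` A = S" using b1 by (simp add: bij_betw_def)
  ultimately show ?thesis by blast
qed

lemma card_fiber_id:
  fixes U A :: "nat set"
  assumes "finite U" "A \<subseteq> U"
  shows "card {\<sigma>. \<sigma> permutes U \<and> \<sigma> ` A = A} = fact (card A) * fact (card U - card A)"
proof -
  define h where "h = (\<lambda>(p::nat \<Rightarrow> nat, q::nat \<Rightarrow> nat). p \<circ> q)"
  have fA: "finite A" using assms finite_subset by blast
  have eq: "{\<sigma>. \<sigma> permutes U \<and> \<sigma> ` A = A} = h ` ({p. p permutes A} \<times> {q. q permutes (U - A)})"
  proof (intro set_eqI iffI)
    fix \<sigma> assume "\<sigma> \<in> {\<sigma>. \<sigma> permutes U \<and> \<sigma> ` A = A}"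
    hence s: "\<sigma> permutes U" "\<sigma> ` A = A" by auto
    have inj: "inj \<sigma>" using permutes_inj[OF s(1)] .
    define p where "p = (\<lambda>x. if x \<in> A then \<sigma> x else x)"
    define q where "q = (\<lambda>x. if x \<in> A then x else \<sigma> x)"
    have sA: "\<sigma> x \<in> A \<longleftrightarrow> x \<in> A" for x
    proof
      assume "\<sigma> x \<in> A"
      then obtain y where "y \<in> A" "\<sigma> x = \<sigma> y" using s(2) by blast
      thus "x \<in> A" using inj by (metis injD)
    next
      assume "x \<in> A" thus "\<sigma> x \<in> A" using s(2) by blast
    qed
    have sU: "\<sigma> x \<in> U \<longleftrightarrow> x \<in> U" for x using permutes_in_image[OF s(1)] .
    have "p permutes A"
    proof (rule bij_imp_permutes)
      have "bij_betw \<sigma> A A" using s(2) inj by (simp add: bij_betw_def inj_on_subset[OF inj])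
      thus "bij_betw p A A" by (rule bij_betw_cong[THEN iffD1, rotated]) (simp add: p_def)
    qed (simp add: p_def)
    moreover have "q permutes (U - A)"
    proof (rule bij_imp_permutes)
      have "\<sigma> ` (U - A) = U - A"
      proof
        show "\<sigma> ` (U - A) \<subseteq> U - A" using sA sU by auto
        show "U - A \<subseteq> \<sigma> ` (U - A)"
        proof
          fix x assume x: "x \<in> U - A"
          have e: "\<sigma> (inv \<sigma> x) = x" using permutes_inverses(1)[OF s(1)] .
          hence "inv \<sigma> x \<in> U - A" using sA[of "inv \<sigma> x"] sU[of "inv \<sigma> x"] x by simp
          thus "x \<in> \<sigma> ` (U - A)" using e by (metis imageI)
        qed
      qed
      hence "bij_betw \<sigma> (U - A) (U - A)" using inj by (simp add: bij_betw_def inj_on_subset[OF inj])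
      thus "bij_betw q (U - A) (U - A)" by (rule bij_betw_cong[THEN iffD1, rotated]) (simp add: q_def)
    next
      fix x assume "x \<notin> U - A" thus "q x = x" using permutes_not_in[OF s(1)] by (auto simp: q_def)
    qed
    moreover have "\<sigma> = p \<circ> q" by (auto simp: p_def q_def sA fun_eq_iff)
    ultimately show "\<sigma> \<in> h ` ({p. p permutes A} \<times> {q. q permutes (U - A)})"
      unfolding h_def by (auto intro!: image_eqI[where x="(p, q)"])
  next
    fix \<sigma> assume "\<sigma> \<in> h ` ({p. p permutes A} \<times> {q. q permutes (U - A)})"
    then obtain p q where pq: "p permutes A" "q permutes (U - A)" "\<sigma> = p \<circ> q"
      unfolding h_def by auto
    have "p permutes U" using permutes_subset[OF pq(1) assms(2)] .
    moreover have "q permutes U" using permutes_subset[OF pq(2)] by blast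
    ultimately have "\<sigma> permutes U" using pq(3) permutes_compose by blast
    moreover have "q x = x" if "x \<in> A" for x using permutes_not_in[OF pq(2)] that by simp
    hence "\<sigma> ` A = p ` A" using pq(3) by (simp add: image_comp[symmetric])
    hence "\<sigma> ` A = A" using permutes_image[OF pq(1)] by simp
    ultimately show "\<sigma> \<in> {\<sigma>. \<sigma> permutes U \<and> \<sigma> ` A = A}" by simp
  qed
  have "inj_on h ({p. p permutes A} \<times> {q. q permutes (U - A)})"
  proof (rule inj_onI, clarify)
    fix p q p' q' assume a: "p permutes A" "q permutes (U - A)" "p' permutes A" "q' permutes (U - A)"
      and e: "h (p, q) = h (p', q')"
    have e': "p (q x) = p' (q' x)" for x using e unfolding h_def by (metis comp_apply prod.simps(2))
    have "p x = p' x \<and> q x = q' x" for x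
    proof (cases "x \<in> A")
      case True
      hence "q x = x" "q' x = x" using permutes_not_in[OF a(2), of x] permutes_not_in[OF a(4), of x] by auto
      thus ?thesis using e'[of x] permutes_not_in[OF a(2)] True by simp
    next
      case False
      have "q x \<notin> A" using permutes_in_image[OF a(2)] permutes_not_in[OF a(2)] False
        by (cases "x \<in> U") auto
      moreover have "q' x \<notin> A" using permutes_in_image[OF a(4)] permutes_not_in[OF a(4)] False
        by (cases "x \<in> U") auto
      ultimately have "p (q x) = q x" "p' (q' x) = q' x" using permutes_not_in[OF a(1)] permutes_not_in[OF a(3)] by auto
      thus ?thesis using e'[of x] permutes_not_in[OF a(1)] permutes_not_in[OF a(3)] False by simp
    qed
    thus "p = p' \<and> q = q'" by (simp add: fun_eq_iff)
  qed
  hence "card {\<sigma>. \<sigma> permutes U \<and> \<sigma> ` A = A} = card ({p. p permutes A} \<times> {q. q permutes (U - A)})"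
    unfolding eq by (rule card_image)
  also have "\<dots> = fact (card A) * fact (card U - card A)"
    using card_permutations[of A "card A"] card_permutations[of "U - A" "card (U - A)"] fA assms
    by (simp add: card_cartesian_product card_Diff_subset)
  finally show ?thesis .
qed

lemma card_fiber:
  fixes U A S :: "nat set"
  assumes "finite U" "A \<subseteq> U" "S \<subseteq> U" "card S = card A"
  shows "card {\<sigma>. \<sigma> permutes U \<and> \<sigma> ` A = S} = fact (card A) * fact (card U - card A)"
proof -
  obtain \<rho> where r: "\<rho> permutes U" "\<rho> ` A = S" using perm_exists[OF assms(1,2,3)] assms(4) by metis
  have inv: "inv \<rho> permutes U" using permutes_inv[OF r(1)] .
  have eq: "{\<sigma>. \<sigma> permutes U \<and> \<sigma> ` A = S} = (\<lambda>\<tau>. \<rho> \<circ> \<tau>) ` {\<sigma>. \<sigma> permutes U \<and> \<sigma> ` A = A}"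
  proof (intro set_eqI iffI)
    fix \<sigma> assume "\<sigma> \<in> {\<sigma>. \<sigma> permutes U \<and> \<sigma> ` A = S}"
    hence s: "\<sigma> permutes U" "\<sigma> ` A = S" by auto
    have "inv \<rho> \<circ> \<sigma> permutes U" using permutes_compose[OF s(1) inv] .
    moreover have "(inv \<rho> \<circ> \<sigma>) ` A = A"
    proof -
      have "(inv \<rho> \<circ> \<sigma>) ` A = inv \<rho> ` (\<sigma> ` A)" by (simp add: image_comp)
      also have "\<dots> = inv \<rho> ` (\<rho> ` A)" using s(2) r(2) by simp
      also have "\<dots> = (inv \<rho> \<circ> \<rho>) ` A" by (simp add: image_comp)
      also have "\<dots> = A" by (simp add: permutes_inv_o(2)[OF r(1)])
      finally show ?thesis .
    qed
    moreover have "\<sigma> = \<rho> \<circ> (inv \<rho> \<circ> \<sigma>)" using permutes_inv_o(1)[OF r(1)] by (simp add: o_assoc)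
    ultimately show "\<sigma> \<in> (\<lambda>\<tau>. \<rho> \<circ> \<tau>) ` {\<sigma>. \<sigma> permutes U \<and> \<sigma> ` A = A}" by blast
  next
    fix \<sigma> assume "\<sigma> \<in> (\<lambda>\<tau>. \<rho> \<circ> \<tau>) ` {\<sigma>. \<sigma> permutes U \<and> \<sigma> ` A = A}"
    then obtain \<tau> where t: "\<tau> permutes U" "\<tau> ` A = A" "\<sigma> = \<rho> \<circ> \<tau>" by auto
    have "(\<rho> \<circ> \<tau>) ` A = \<rho> ` (\<tau> ` A)" by (simp add: image_comp)
    hence "(\<rho> \<circ> \<tau>) ` A = S" using t(2) r(2) by simp
    thus "\<sigma> \<in> {\<sigma>. \<sigma> permutes U \<and> \<sigma> ` A = S}"
      using permutes_compose[OF t(1) r(1)] t(3) by simp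
  qed
  have "inj_on (\<lambda>\<tau>. \<rho> \<circ> \<tau>) {\<sigma>. \<sigma> permutes U \<and> \<sigma> ` A = A}"
  proof (rule inj_onI)
    fix a b assume "\<rho> \<circ> a = \<rho> \<circ> b"
    hence "inv \<rho> \<circ> (\<rho> \<circ> a) = inv \<rho> \<circ> (\<rho> \<circ> b)" by simp
    thus "a = b" using permutes_inv_o(2)[OF r(1)] by (simp add: o_assoc)
  qed
  hence "card {\<sigma>. \<sigma> permutes U \<and> \<sigma> ` A = S} = card {\<sigma>. \<sigma> permutes U \<and> \<sigma> ` A = A}"
    unfolding eq by (rule card_image)
  thus ?thesis using card_fiber_id[OF assms(1,2)] by simp
qed

lemma perm_take_eq:
  assumes "\<sigma> permutes {..<length w}" "j \<le> length w"
  shows "mset (take j (permute_list \<sigma> w)) = image_mset (nth w) (mset_set (\<sigma> ` {..<j}))"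
    and "mset (drop j (permute_list \<sigma> w)) = image_mset (nth w) (mset_set ({..<length w} - \<sigma> ` {..<j}))"
proof -
  let ?n = "length w"
  have inj: "inj_on \<sigma> X" for X using permutes_inj_on[OF assms(1)] .
  have "take j (permute_list \<sigma> w) = map (\<lambda>i. w ! \<sigma> i) [0..<j]"
    unfolding permute_list_def using assms(2) by (simp add: take_map take_upt)
  hence "mset (take j (permute_list \<sigma> w)) = image_mset (nth w) (image_mset \<sigma> (mset_set {0..<j}))"
    by (simp add: multiset.map_comp o_def)
  also have "image_mset \<sigma> (mset_set {0..<j}) = mset_set (\<sigma> ` {..<j})"
    using image_mset_mset_set[OF inj] by (simp add: atLeast0LessThan)
  finally show "mset (take j (permute_list \<sigma> w)) = image_mset (nth w) (mset_set (\<sigma> ` {..<j}))" .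
  have "drop j (permute_list \<sigma> w) = map (\<lambda>i. w ! \<sigma> i) [j..<?n]"
    unfolding permute_list_def using assms(2) by (simp add: drop_map)
  hence "mset (drop j (permute_list \<sigma> w)) = image_mset (nth w) (image_mset \<sigma> (mset_set {j..<?n}))"
    by (simp add: multiset.map_comp o_def)
  also have "image_mset \<sigma> (mset_set {j..<?n}) = mset_set (\<sigma> ` {j..<?n})"
    using image_mset_mset_set[OF inj] by simp
  also have "\<sigma> ` {j..<?n} = {..<?n} - \<sigma> ` {..<j}"
  proof -
    have u: "{..<?n} = {..<j} \<union> {j..<?n}" using assms(2) by auto
    have e1: "\<sigma> ` {..<?n} = \<sigma> ` {..<j} \<union> \<sigma> ` {j..<?n}" by (simp only: image_Un[symmetric] u[symmetric])
    have e2: "\<sigma> ` {..<?n} = {..<?n}" using permutes_image[OF assms(1)] .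
    have d: "\<sigma> ` {..<j} \<inter> \<sigma> ` {j..<?n} = {}"
    proof -
      have "\<sigma> ` {..<j} \<inter> \<sigma> ` {j..<?n} = \<sigma> ` ({..<j} \<inter> {j..<?n})"
        by (rule image_Int[symmetric, OF permutes_inj[OF assms(1)]])
      also have "{..<j} \<inter> {j..<?n} = {}" by auto
      finally show ?thesis by simp
    qed
    have "(\<sigma> ` {..<j} \<union> \<sigma> ` {j..<?n}) - \<sigma> ` {..<j} = \<sigma> ` {j..<?n}"
      using d by (simp add: Un_Diff Diff_triv Int_commute)
    thus ?thesis using e1 e2 by simp
  qed
  finally show "mset (drop j (permute_list \<sigma> w)) = image_mset (nth w) (mset_set ({..<length w} - \<sigma> ` {..<j}))" .
qed

definition bisym :: "(nat list \<Rightarrow> nat list \<Rightarrow> complex) \<Rightarrow> bool" where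
  "bisym F \<longleftrightarrow> (\<forall>a a' c c'. mset a = mset a' \<longrightarrow> mset c = mset c' \<longrightarrow> F a c = F a' c')"

lemma finite_subsets: "finite {S. S \<subseteq> {..<n::nat} \<and> P S}"
  by (rule finite_subset[of _ "Pow {..<n}"]) auto

lemma Lemma_L:
  assumes "length w = n" "j \<le> n" and F: "bisym F"
  shows "(\<Sum>\<sigma>\<in>{\<sigma>. \<sigma> permutes {..<n}}. F (take j (permute_list \<sigma> w)) (drop j (permute_list \<sigma> w)))
    = of_nat (fact j * fact (n - j)) * (\<Sum>S\<in>{S. S \<subseteq> {..<n} \<and> card S = j}. F (sel w S) (sel w ({..<n} - S)))"
proof -
  define G where "G = (\<lambda>S. F (sel w S) (sel w ({..<n} - S)))"
  define P where "P = {\<sigma>. \<sigma> permutes {..<n}}"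
  define T where "T = {S. S \<subseteq> {..<n} \<and> card S = j}"
  have trm: "F (take j (permute_list \<sigma> w)) (drop j (permute_list \<sigma> w)) = G (\<sigma> ` {..<j})"
    if "\<sigma> \<in> P" for \<sigma>
  proof -
    have s: "\<sigma> permutes {..<length w}" using that assms(1) by (simp add: P_def)
    show ?thesis unfolding G_def using F[unfolded bisym_def, rule_format,
        OF perm_take_eq(1)[OF s, of j, unfolded mset_sel[symmetric]] perm_take_eq(2)[OF s, of j, unfolded mset_sel[symmetric]]]
      assms by simp
  qed
  have fP: "finite P" unfolding P_def by (rule finite_perms)
  have fT: "finite T" unfolding T_def by (rule finite_subsets)
  have img: "(\<lambda>\<sigma>. \<sigma> ` {..<j}) ` P \<subseteq> T"
  proof
    fix S assume "S \<in> (\<lambda>\<sigma>. \<sigma> ` {..<j}) ` P"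
    then obtain \<sigma> where s: "\<sigma> permutes {..<n}" "S = \<sigma> ` {..<j}" unfolding P_def by auto
    have "S \<subseteq> {..<n}" using s permutes_image[OF s(1)] assms(2) by auto
    moreover have "card S = j" using s card_image[OF permutes_inj_on[OF s(1)]] by simp
    ultimately show "S \<in> T" unfolding T_def by simp
  qed
  have "(\<Sum>\<sigma>\<in>P. F (take j (permute_list \<sigma> w)) (drop j (permute_list \<sigma> w))) = (\<Sum>\<sigma>\<in>P. G (\<sigma> ` {..<j}))"
    using trm by simp
  also have "\<dots> = (\<Sum>S\<in>T. \<Sum>\<sigma>\<in>{\<sigma> \<in> P. \<sigma> ` {..<j} = S}. G (\<sigma> ` {..<j}))"
    by (rule sum.group[OF fP fT img, symmetric])
  also have "\<dots> = (\<Sum>S\<in>T. of_nat (fact j * fact (n - j)) * G S)"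
  proof (rule sum.cong[OF refl])
    fix S assume "S \<in> T"
    hence S: "S \<subseteq> {..<n}" "card S = j" unfolding T_def by auto
    have c: "card {\<sigma> \<in> P. \<sigma> ` {..<j} = S} = fact j * fact (n - j)"
      using card_fiber[of "{..<n}" "{..<j}" S] S assms(2) unfolding P_def by simp
    have "(\<Sum>\<sigma>\<in>{\<sigma> \<in> P. \<sigma> ` {..<j} = S}. G (\<sigma> ` {..<j})) = (\<Sum>\<sigma>\<in>{\<sigma> \<in> P. \<sigma> ` {..<j} = S}. G S)"
      by (rule sum.cong) auto
    also have "\<dots> = of_nat (fact j * fact (n - j)) * G S" using c by simp
    finally show "(\<Sum>\<sigma>\<in>{\<sigma> \<in> P. \<sigma> ` {..<j} = S}. G (\<sigma> ` {..<j})) = of_nat (fact j * fact (n - j)) * G S" .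
  qed
  finally show ?thesis unfolding P_def T_def G_def by (simp add: sum_distrib_left)
qed

lemma mset_sel_append:
  assumes "A \<subseteq> {..<length xs}" "finite B"
  shows "mset (sel (xs @ zs) (A \<union> (\<lambda>i. i + length xs) ` B)) = mset (sel xs A @ sel zs B)"
proof -
  have fA: "finite A" using assms(1) finite_subset by blast
  have disj: "A \<inter> (\<lambda>i. i + length xs) ` B = {}" using assms(1) by auto
  have inj: "inj_on (\<lambda>i. i + length xs) B" by (simp add: inj_on_def)
  have "mset_set (A \<union> (\<lambda>i. i + length xs) ` B) = mset_set A + image_mset (\<lambda>i. i + length xs) (mset_set B)"
    using mset_set_Union[OF fA finite_imageI[OF assms(2)] disj] image_mset_mset_set[OF inj] by simp
  hence "mset (sel (xs @ zs) (A \<union> (\<lambda>i. i + length xs) ` B))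
      = image_mset (nth (xs @ zs)) (mset_set A) + image_mset (\<lambda>i. (xs @ zs) ! (i + length xs)) (mset_set B)"
    unfolding mset_sel by (simp add: multiset.map_comp o_def)
  also have "image_mset (nth (xs @ zs)) (mset_set A) = image_mset (nth xs) (mset_set A)"
    by (rule image_mset_cong) (use assms(1) fA in \<open>auto simp: nth_append\<close>)
  also have "image_mset (\<lambda>i. (xs @ zs) ! (i + length xs)) (mset_set B) = image_mset (nth zs) (mset_set B)"
    by (simp add: nth_append)
  finally show ?thesis by (simp add: mset_sel)
qed

lemma compl_split:
  fixes A B :: "nat set"
  assumes "A \<subseteq> {..<k}" "B \<subseteq> {..<M}"
  shows "{..<k + M} - (A \<union> (\<lambda>i. i + k) ` B) = ({..<k} - A) \<union> (\<lambda>i. i + k) ` ({..<M} - B)"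
proof (intro set_eqI iffI)
  fix x assume x: "x \<in> {..<k + M} - (A \<union> (\<lambda>i. i + k) ` B)"
  show "x \<in> ({..<k} - A) \<union> (\<lambda>i. i + k) ` ({..<M} - B)"
  proof (cases "x < k")
    case True thus ?thesis using x by auto
  next
    case False
    hence "x = (x - k) + k" by simp
    moreover have "x - k \<in> {..<M} - B"
    proof -
      have "x - k < M" using x False by auto
      moreover have "x - k \<notin> B"
      proof
        assume "x - k \<in> B"
        hence "(x - k) + k \<in> (\<lambda>i. i + k) ` B" by blast
        thus False using x False by simp
      qed
      ultimately show ?thesis by simp
    qed
    ultimately show ?thesis by blast
  qed
next
  fix x assume "x \<in> ({..<k} - A) \<union> (\<lambda>i. i + k) ` ({..<M} - B)"
  thus "x \<in> {..<k + M} - (A \<union> (\<lambda>i. i + k) ` B)" using assms by auto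
qed

lemma finite_subsets2: "finite {A. A \<subseteq> {..<n::nat}}"
proof -
  have "{A. A \<subseteq> {..<n::nat}} = Pow {..<n}" by auto
  thus ?thesis by simp
qed

lemma subset_split:
  fixes g :: "nat set \<Rightarrow> complex"
  shows "(\<Sum>S\<in>{S. S \<subseteq> {..<k + M} \<and> card S = k}. g S)
    = (\<Sum>A\<in>{A. A \<subseteq> {..<k}}. \<Sum>B\<in>{B. B \<subseteq> {..<M} \<and> card B = k - card A}. g (A \<union> (\<lambda>i. i + k) ` B))"
proof -
  define h where "h = (\<lambda>(A, B). A \<union> (\<lambda>i. i + k) ` (B :: nat set))"
  define Sig where "Sig = Sigma {A. A \<subseteq> {..<k}} (\<lambda>A. {B. B \<subseteq> {..<M} \<and> card B = k - card A})"
  have fin: "finite {A. A \<subseteq> {..<k}}" by (rule finite_subsets2)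
  have rhs: "(\<Sum>A\<in>{A. A \<subseteq> {..<k}}. \<Sum>B\<in>{B. B \<subseteq> {..<M} \<and> card B = k - card A}. g (A \<union> (\<lambda>i. i + k) ` B))
      = (\<Sum>(A, B)\<in>Sig. g (A \<union> (\<lambda>i. i + k) ` B))"
    unfolding Sig_def by (rule sum.Sigma[OF fin]) (simp add: finite_subsets)
  also have "\<dots> = (\<Sum>p\<in>Sig. g (h p))" by (rule sum.cong) (auto simp: h_def)
  finally have rhs: "(\<Sum>A\<in>{A. A \<subseteq> {..<k}}. \<Sum>B\<in>{B. B \<subseteq> {..<M} \<and> card B = k - card A}. g (A \<union> (\<lambda>i. i + k) ` B))
      = (\<Sum>p\<in>Sig. g (h p))" .
  have cardh: "card (A \<union> (\<lambda>i. i + k) ` B) = card A + card B" if "A \<subseteq> {..<k}" "B \<subseteq> {..<M}" for A B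
  proof -
    have "finite A" "finite B" using that finite_subset by blast+
    moreover have "A \<inter> (\<lambda>i. i + k) ` B = {}" using that by auto
    ultimately have "card (A \<union> (\<lambda>i. i + k) ` B) = card A + card ((\<lambda>i. i + k) ` B)"
      by (simp add: card_Un_disjoint)
    also have "card ((\<lambda>i. i + k) ` B) = card B" by (rule card_image) (simp add: inj_on_def)
    finally show ?thesis .
  qed
  have inj: "inj_on h Sig"
  proof (rule inj_onI, clarify)
    fix A B A' B' assume a: "(A, B) \<in> Sig" "(A', B') \<in> Sig" and e: "h (A, B) = h (A', B')"
    have s: "A \<subseteq> {..<k}" "A' \<subseteq> {..<k}" using a unfolding Sig_def by auto
    have "A = h (A, B) \<inter> {..<k}" "A' = h (A', B') \<inter> {..<k}" using s unfolding h_def by auto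
    hence "A = A'" using e by simp
    moreover have "B = {i. i + k \<in> h (A, B)}" "B' = {i. i + k \<in> h (A', B')}" using s unfolding h_def by auto
    hence "B = B'" using e by simp
    ultimately show "A = A' \<and> B = B'" by simp
  qed
  have img: "h ` Sig = {S. S \<subseteq> {..<k + M} \<and> card S = k}"
  proof (intro set_eqI iffI)
    fix S assume "S \<in> h ` Sig"
    then obtain A B where ab: "A \<subseteq> {..<k}" "B \<subseteq> {..<M}" "card B = k - card A" "S = h (A, B)"
      unfolding Sig_def by auto
    have "card A \<le> k" using card_mono[OF _ ab(1)] by simp
    hence "card S = k" using cardh[OF ab(1,2)] ab(3,4) by (simp add: h_def)
    moreover have "S \<subseteq> {..<k + M}" using ab unfolding h_def by auto
    ultimately show "S \<in> {S. S \<subseteq> {..<k + M} \<and> card S = k}" by simp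
  next
    fix S assume "S \<in> {S. S \<subseteq> {..<k + M} \<and> card S = k}"
    hence S: "S \<subseteq> {..<k + M}" "card S = k" by auto
    define A where "A = S \<inter> {..<k}"
    define B where "B = {i. i + k \<in> S}"
    have A: "A \<subseteq> {..<k}" unfolding A_def by auto
    have B: "B \<subseteq> {..<M}" using S(1) unfolding B_def by auto
    have hS: "S = h (A, B)"
    proof (intro set_eqI iffI)
      fix x assume "x \<in> S"
      thus "x \<in> h (A, B)"
      proof (cases "x < k")
        case True thus ?thesis using \<open>x \<in> S\<close> unfolding h_def A_def by auto
      next
        case False
        hence "x = (x - k) + k" "x - k \<in> B" using \<open>x \<in> S\<close> unfolding B_def by auto
        thus ?thesis unfolding h_def by (metis (no_types, lifting) UnI2 case_prod_conv imageI)
      qed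
    next
      fix x assume "x \<in> h (A, B)" thus "x \<in> S" unfolding h_def A_def B_def by auto
    qed
    have "card B = k - card A" using cardh[OF A B] S(2) hS by (simp add: h_def)
    thus "S \<in> h ` Sig" using A B hS unfolding Sig_def by blast
  qed
  have "(\<Sum>S\<in>{S. S \<subseteq> {..<k + M} \<and> card S = k}. g S) = (\<Sum>p\<in>Sig. g (h p))"
    unfolding img[symmetric] by (rule sum.reindex[OF inj, unfolded o_def])
  thus ?thesis using rhs by simp
qed

lemma sum_idx_split:
  "(\<Sum>z\<in>idx N (m + r). f z) = (\<Sum>u\<in>idx N m. \<Sum>v\<in>idx N r. f (u @ v))"
proof -
  have inj: "inj_on (\<lambda>(u, v). u @ v) (idx N m \<times> idx N r)"
  proof (rule inj_onI, clarify)
    fix u v u' v' assume "u \<in> idx N m" "u' \<in> idx N m" and e: "u @ v = u' @ v'"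
    hence "length u = length u'" unfolding idx_def by simp
    thus "u = u' \<and> v = v'" using e by simp
  qed
  have img: "(\<lambda>(u, v). u @ v) ` (idx N m \<times> idx N r) = idx N (m + r)"
  proof (intro set_eqI iffI)
    fix z assume "z \<in> (\<lambda>(u, v). u @ v) ` (idx N m \<times> idx N r)"
    thus "z \<in> idx N (m + r)" by (auto simp: idx_def)
  next
    fix z assume z: "z \<in> idx N (m + r)"
    hence "take m z \<in> idx N m" "drop m z \<in> idx N r" unfolding idx_def
      by (auto dest: in_set_takeD in_set_dropD)
    moreover have "z = take m z @ drop m z" by simp
    ultimately show "z \<in> (\<lambda>(u, v). u @ v) ` (idx N m \<times> idx N r)"
      by (intro rev_image_eqI[of "(take m z, drop m z)"]) simp_all
  qed
  have "(\<Sum>z\<in>idx N (m + r). f z) = (\<Sum>p\<in>idx N m \<times> idx N r. f (case p of (u, v) \<Rightarrow> u @ v))"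
    unfolding img[symmetric] by (rule sum.reindex[OF inj, unfolded o_def])
  also have "\<dots> = (\<Sum>(u, v)\<in>idx N m \<times> idx N r. f (u @ v))"
    by (rule sum.cong) auto
  also have "\<dots> = (\<Sum>u\<in>idx N m. \<Sum>v\<in>idx N r. f (u @ v))"
    by (simp add: sum.cartesian_product)
  finally show ?thesis .
qed

lemma bij_permute_idx:
  assumes "\<rho> permutes {..<M}"
  shows "bij_betw (permute_list \<rho>) (idx N M) (idx N M)"
proof (rule bij_betw_byWitness[where f'="permute_list (inv \<rho>)"])
  have inv: "inv \<rho> permutes {..<M}" using permutes_inv[OF assms] .
  show "\<forall>a\<in>idx N M. permute_list (inv \<rho>) (permute_list \<rho> a) = a"
  proof
    fix a assume "a \<in> idx N M"
    hence l: "length a = M" unfolding idx_def by simp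
    have "permute_list (inv \<rho>) (permute_list \<rho> a) = permute_list (\<rho> \<circ> inv \<rho>) a"
      using permute_list_compose[of "inv \<rho>" a \<rho>] inv l by simp
    thus "permute_list (inv \<rho>) (permute_list \<rho> a) = a" using permutes_inv_o(1)[OF assms] by simp
  qed
  show "\<forall>a\<in>idx N M. permute_list \<rho> (permute_list (inv \<rho>) a) = a"
  proof
    fix a assume "a \<in> idx N M"
    hence l: "length a = M" unfolding idx_def by simp
    have "permute_list \<rho> (permute_list (inv \<rho>) a) = permute_list (inv \<rho> \<circ> \<rho>) a"
      using permute_list_compose[of \<rho> a "inv \<rho>"] assms l by simp
    thus "permute_list \<rho> (permute_list (inv \<rho>) a) = a" using permutes_inv_o(2)[OF assms] by simp
  qed
  show "permute_list \<rho> ` idx N M \<subseteq> idx N M"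
  proof
    fix b assume "b \<in> permute_list \<rho> ` idx N M"
    then obtain a where a: "a \<in> idx N M" "b = permute_list \<rho> a" by auto
    hence "\<rho> permutes {..<length a}" using assms unfolding idx_def by simp
    thus "b \<in> idx N M" using a unfolding idx_def by simp
  qed
  show "permute_list (inv \<rho>) ` idx N M \<subseteq> idx N M"
  proof
    fix b assume "b \<in> permute_list (inv \<rho>) ` idx N M"
    then obtain a where a: "a \<in> idx N M" "b = permute_list (inv \<rho>) a" by auto
    hence "inv \<rho> permutes {..<length a}" using permutes_inv[OF assms] unfolding idx_def by simp
    thus "b \<in> idx N M" using a unfolding idx_def by simp
  qed
qed

definition Qf :: "nat \<Rightarrow> (nat list \<Rightarrow> complex) \<Rightarrow> (nat list \<Rightarrow> complex) \<Rightarrow> nat \<Rightarrow> nat \<Rightarrow> nat list \<Rightarrow> nat list \<Rightarrow> complex" where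
  "Qf N \<psi> \<phi> M m a c = (\<Sum>u\<in>idx N m. \<Sum>v\<in>idx N (M - m). cnj (\<psi> (u @ v)) * (\<phi> (a @ u) * \<psi> (c @ v)))"

lemma msym_app: "msym f \<Longrightarrow> mset x = mset x' \<Longrightarrow> f (a @ x) = f (a @ x')"
  unfolding msym_def by simp

lemma msym_app2: "msym f \<Longrightarrow> mset x = mset x' \<Longrightarrow> f (x @ a) = f (x' @ a)"
  unfolding msym_def by simp

lemma zs_reindex:
  assumes sp: "msym \<psi>" and sf: "msym \<phi>" and B: "B \<subseteq> {..<M}" "card B = m"
  shows "(\<Sum>zs\<in>idx N M. cnj (\<psi> zs) * (\<phi> (a @ sel zs B) * \<psi> (c @ sel zs ({..<M} - B)))) = Qf N \<psi> \<phi> M m a c"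
proof -
  have mM: "m \<le> M" using card_mono[OF _ B(1)] B(2) by simp
  obtain \<rho> where r: "\<rho> permutes {..<M}" "\<rho> ` {..<m} = B"
    using perm_exists[of "{..<M}" "{..<m}" B] B mM by auto
  define f where "f = (\<lambda>z. cnj (\<psi> z) * (\<phi> (a @ take m z) * \<psi> (c @ drop m z)))"
  have eq: "cnj (\<psi> zs) * (\<phi> (a @ sel zs B) * \<psi> (c @ sel zs ({..<M} - B))) = f (permute_list \<rho> zs)"
    if "zs \<in> idx N M" for zs
  proof -
    have l: "length zs = M" using that unfolding idx_def by simp
    have rr: "\<rho> permutes {..<length zs}" using r(1) l by simp
    have m1: "mset (take m (permute_list \<rho> zs)) = mset (sel zs B)"
      using perm_take_eq(1)[OF rr, of m] mM l r(2) by (simp add: mset_sel)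
    have m2: "mset (drop m (permute_list \<rho> zs)) = mset (sel zs ({..<M} - B))"
      using perm_take_eq(2)[OF rr, of m] mM l r(2) by (simp add: mset_sel)
    have m3: "mset (permute_list \<rho> zs) = mset zs" using mset_permute_list[OF rr] .
    have "\<psi> (permute_list \<rho> zs) = \<psi> zs" using sp m3 unfolding msym_def by blast
    moreover have "\<phi> (a @ take m (permute_list \<rho> zs)) = \<phi> (a @ sel zs B)" using msym_app[OF sf m1] .
    moreover have "\<psi> (c @ drop m (permute_list \<rho> zs)) = \<psi> (c @ sel zs ({..<M} - B))" using msym_app[OF sp m2] .
    ultimately show ?thesis unfolding f_def by simp
  qed
  have "(\<Sum>zs\<in>idx N M. cnj (\<psi> zs) * (\<phi> (a @ sel zs B) * \<psi> (c @ sel zs ({..<M} - B))))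
      = (\<Sum>zs\<in>idx N M. f (permute_list \<rho> zs))" using eq by (rule sum.cong[OF refl])
  also have "\<dots> = (\<Sum>z\<in>idx N M. f z)" by (rule sum.reindex_bij_betw[OF bij_permute_idx[OF r(1)]])
  also have "\<dots> = (\<Sum>z\<in>idx N (m + (M - m)). f z)" using mM by simp
  also have "\<dots> = (\<Sum>u\<in>idx N m. \<Sum>v\<in>idx N (M - m). f (u @ v))" by (rule sum_idx_split)
  also have "\<dots> = Qf N \<psi> \<phi> M m a c"
    unfolding Qf_def
  proof (rule sum.cong[OF refl], rule sum.cong[OF refl])
    fix u v assume "u \<in> idx N m"
    hence "length u = m" unfolding idx_def by simp
    thus "f (u @ v) = cnj (\<psi> (u @ v)) * (\<phi> (a @ u) * \<psi> (c @ v))" unfolding f_def by simp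
  qed
  finally show ?thesis .
qed

lemma bisym_prod: "msym \<phi> \<Longrightarrow> msym \<psi> \<Longrightarrow> bisym (\<lambda>a c. \<phi> a * \<psi> c)"
  unfolding bisym_def msym_def by metis

lemma bisym_Qf: "msym \<phi> \<Longrightarrow> msym \<psi> \<Longrightarrow> bisym (\<lambda>a c. r * Qf N \<psi> \<phi> M m a c)"
  unfolding bisym_def
proof (intro allI impI)
  fix a a' c c' :: "nat list" assume sf: "msym \<phi>" and sp: "msym \<psi>" and m: "mset a = mset a'" "mset c = mset c'"
  have "\<phi> (a @ u) = \<phi> (a' @ u)" "\<psi> (c @ v) = \<psi> (c' @ v)" for u v
    using msym_app2[OF sf m(1)] msym_app2[OF sp m(2)] by auto
  thus "r * Qf N \<psi> \<phi> M m a c = r * Qf N \<psi> \<phi> M m a' c'" unfolding Qf_def by simp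
qed

lemma symP_Phi:
  assumes sf: "msym \<phi>" and sp: "msym \<psi>" and l: "length w = k + M"
  shows "symP (\<lambda>ys. \<phi> (take k ys) * \<psi> (drop k ys)) w
    = of_nat (fact k * fact M) / of_nat (fact (k + M)) *
      (\<Sum>S\<in>{S. S \<subseteq> {..<k + M} \<and> card S = k}. \<phi> (sel w S) * \<psi> (sel w ({..<k + M} - S)))"
proof -
  have "(\<Sum>\<sigma>\<in>{\<sigma>. \<sigma> permutes {..<k + M}}. \<phi> (take k (permute_list \<sigma> w)) * \<psi> (drop k (permute_list \<sigma> w)))
    = of_nat (fact k * fact (k + M - k)) * (\<Sum>S\<in>{S. S \<subseteq> {..<k + M} \<and> card S = k}. \<phi> (sel w S) * \<psi> (sel w ({..<k + M} - S)))"
    using Lemma_L[OF l _ bisym_prod[OF sf sp], of k] by simp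
  thus ?thesis unfolding symP_alt l by simp
qed

lemma LHS_formula:
  assumes psi: "inH N M \<psi>" and phi: "inH N k \<phi>" and xs: "xs \<in> idx N k"
  shows "complex_of_real (fact (M + k) / fact M) *
     (\<Sum>zs\<in>idx N M. cnj (\<psi> zs) * symP (\<lambda>ys. \<phi> (take k ys) * \<psi> (drop k ys)) (xs @ zs))
   = of_nat (fact k) * (\<Sum>A\<in>{A. A \<subseteq> {..<k}}. of_nat (M choose (k - card A)) *
        Qf N \<psi> \<phi> M (k - card A) (sel xs A) (sel xs ({..<k} - A)))"
proof -
  have sf: "msym \<phi>" using inH_msym[OF phi] .
  have sp: "msym \<psi>" using inH_msym[OF psi] .
  have lx: "length xs = k" using xs unfolding idx_def by simp
  define T where "T = {S. S \<subseteq> {..<k + M} \<and> card S = k}"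
  define g where "g = (\<lambda>S. \<Sum>zs\<in>idx N M. cnj (\<psi> zs) * (\<phi> (sel (xs @ zs) S) * \<psi> (sel (xs @ zs) ({..<k + M} - S))))"
  have c: "complex_of_real (fact (M + k) / fact M) * (of_nat (fact k * fact M) / of_nat (fact (k + M))) = of_nat (fact k)"
  proof -
    have "(fact (M + k) :: complex) \<noteq> 0" "(fact M :: complex) \<noteq> 0" by simp_all
    thus ?thesis by (simp add: field_simps add.commute)
  qed
  have "(\<Sum>zs\<in>idx N M. cnj (\<psi> zs) * symP (\<lambda>ys. \<phi> (take k ys) * \<psi> (drop k ys)) (xs @ zs))
      = (\<Sum>zs\<in>idx N M. of_nat (fact k * fact M) / of_nat (fact (k + M)) *
           (cnj (\<psi> zs) * (\<Sum>S\<in>T. \<phi> (sel (xs @ zs) S) * \<psi> (sel (xs @ zs) ({..<k + M} - S)))))"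
  proof (rule sum.cong[OF refl])
    fix zs assume "zs \<in> idx N M"
    hence "length (xs @ zs) = k + M" using lx unfolding idx_def by simp
    hence eq: "symP (\<lambda>ys. \<phi> (take k ys) * \<psi> (drop k ys)) (xs @ zs) = of_nat (fact k * fact M) / of_nat (fact (k + M)) *
      (\<Sum>S\<in>T. \<phi> (sel (xs @ zs) S) * \<psi> (sel (xs @ zs) ({..<k + M} - S)))"
      unfolding T_def by (rule symP_Phi[OF sf sp])
    show "cnj (\<psi> zs) * symP (\<lambda>ys. \<phi> (take k ys) * \<psi> (drop k ys)) (xs @ zs) = of_nat (fact k * fact M) / of_nat (fact (k + M)) *
           (cnj (\<psi> zs) * (\<Sum>S\<in>T. \<phi> (sel (xs @ zs) S) * \<psi> (sel (xs @ zs) ({..<k + M} - S))))"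
      by (subst eq) (rule mult.left_commute)
  qed
  also have "\<dots> = of_nat (fact k * fact M) / of_nat (fact (k + M)) * (\<Sum>zs\<in>idx N M. \<Sum>S\<in>T.
         cnj (\<psi> zs) * (\<phi> (sel (xs @ zs) S) * \<psi> (sel (xs @ zs) ({..<k + M} - S))))"
    by (simp only: sum_distrib_left)
  also have "\<dots> = of_nat (fact k * fact M) / of_nat (fact (k + M)) * (\<Sum>S\<in>T. g S)"
    unfolding g_def by (subst sum.swap) (rule refl)
  finally have step1: "complex_of_real (fact (M + k) / fact M) *
     (\<Sum>zs\<in>idx N M. cnj (\<psi> zs) * symP (\<lambda>ys. \<phi> (take k ys) * \<psi> (drop k ys)) (xs @ zs))
     = of_nat (fact k) * (\<Sum>S\<in>T. g S)"
    by (simp only: mult.assoc[symmetric] c)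
  have "(\<Sum>S\<in>T. g S) = (\<Sum>A\<in>{A. A \<subseteq> {..<k}}. \<Sum>B\<in>{B. B \<subseteq> {..<M} \<and> card B = k - card A}. g (A \<union> (\<lambda>i. i + k) ` B))"
    unfolding T_def by (rule subset_split)
  also have "\<dots> = (\<Sum>A\<in>{A. A \<subseteq> {..<k}}. of_nat (M choose (k - card A)) *
        Qf N \<psi> \<phi> M (k - card A) (sel xs A) (sel xs ({..<k} - A)))"
  proof (rule sum.cong[OF refl])
    fix A assume "A \<in> {A. A \<subseteq> {..<k}}"
    hence A: "A \<subseteq> {..<k}" by simp
    have "g (A \<union> (\<lambda>i. i + k) ` B) = Qf N \<psi> \<phi> M (k - card A) (sel xs A) (sel xs ({..<k} - A))"
      if B: "B \<in> {B. B \<subseteq> {..<M} \<and> card B = k - card A}" for B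
    proof -
      have B1: "B \<subseteq> {..<M}" "card B = k - card A" using B by auto
      have fB: "finite B" "finite ({..<M} - B)" using B1(1) finite_subset by auto
      have "g (A \<union> (\<lambda>i. i + k) ` B) = (\<Sum>zs\<in>idx N M. cnj (\<psi> zs) *
          (\<phi> (sel xs A @ sel zs B) * \<psi> (sel xs ({..<k} - A) @ sel zs ({..<M} - B))))"
        unfolding g_def
      proof (rule sum.cong[OF refl])
        fix zs
        have e1: "mset (sel (xs @ zs) (A \<union> (\<lambda>i. i + k) ` B)) = mset (sel xs A @ sel zs B)"
          using mset_sel_append[of A xs B zs] A lx fB by simp
        have e2: "mset (sel (xs @ zs) ({..<k + M} - (A \<union> (\<lambda>i. i + k) ` B)))
             = mset (sel xs ({..<k} - A) @ sel zs ({..<M} - B))"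
          unfolding compl_split[OF A B1(1)] using mset_sel_append[of "{..<k} - A" xs "{..<M} - B" zs] lx fB by auto
        show "cnj (\<psi> zs) * (\<phi> (sel (xs @ zs) (A \<union> (\<lambda>i. i + k) ` B)) * \<psi> (sel (xs @ zs) ({..<k + M} - (A \<union> (\<lambda>i. i + k) ` B))))
          = cnj (\<psi> zs) * (\<phi> (sel xs A @ sel zs B) * \<psi> (sel xs ({..<k} - A) @ sel zs ({..<M} - B)))"
          using sf[unfolded msym_def, rule_format, OF e1] sp[unfolded msym_def, rule_format, OF e2] by simp
      qed
      also have "\<dots> = Qf N \<psi> \<phi> M (k - card A) (sel xs A) (sel xs ({..<k} - A))"
        by (rule zs_reindex[OF sp sf B1])
      finally show ?thesis .
    qed
    hence "(\<Sum>B\<in>{B. B \<subseteq> {..<M} \<and> card B = k - card A}. g (A \<union> (\<lambda>i. i + k) ` B))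
        = (\<Sum>B\<in>{B. B \<subseteq> {..<M} \<and> card B = k - card A}. Qf N \<psi> \<phi> M (k - card A) (sel xs A) (sel xs ({..<k} - A)))"
      by (rule sum.cong[OF refl])
    also have "\<dots> = of_nat (M choose (k - card A)) * Qf N \<psi> \<phi> M (k - card A) (sel xs A) (sel xs ({..<k} - A))"
      using n_subsets[of "{..<M}" "k - card A"] by simp
    finally show "(\<Sum>B\<in>{B. B \<subseteq> {..<M} \<and> card B = k - card A}. g (A \<union> (\<lambda>i. i + k) ` B))
        = of_nat (M choose (k - card A)) * Qf N \<psi> \<phi> M (k - card A) (sel xs A) (sel xs ({..<k} - A))" .
  qed
  finally show ?thesis using step1 by simp
qed

lemma tensor_rdm:
  "tensorI l (rdm N M \<psi> (k - l)) \<phi> ys =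
    (if k - l \<le> M then of_nat (fact M) / of_nat (fact (M - (k - l))) else 0) *
    Qf N \<psi> \<phi> M (k - l) (take l ys) (drop l ys)"
proof -
  have "(\<Sum>u\<in>idx N (k - l). (\<Sum>v\<in>idx N (M - (k - l)). \<psi> (drop l ys @ v) * cnj (\<psi> (u @ v))) * \<phi> (take l ys @ u))
      = Qf N \<psi> \<phi> M (k - l) (take l ys) (drop l ys)"
    unfolding Qf_def sum_distrib_right
    by (rule sum.cong[OF refl], rule sum.cong[OF refl]) (simp only: ac_simps)
  thus ?thesis unfolding tensorI_def rdm_def by simp
qed

lemma RHS_term:
  assumes l: "l \<le> k" and psi: "inH N M \<psi>" and phi: "inH N k \<phi>" and xs: "xs \<in> idx N k"
  shows "Tpow k l (rdm N M \<psi> (k - l)) \<phi> xs = of_nat (fact k) / of_nat (fact (k - l)) *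
    ((if k - l \<le> M then of_nat (fact M) / of_nat (fact (M - (k - l))) else 0) *
     (of_nat (fact l * fact (k - l)) / of_nat (fact k) *
      (\<Sum>A\<in>{A. A \<subseteq> {..<k} \<and> card A = l}. Qf N \<psi> \<phi> M (k - l) (sel xs A) (sel xs ({..<k} - A)))))"
proof -
  define cR :: complex where "cR = (if k - l \<le> M then of_nat (fact M) / of_nat (fact (M - (k - l))) else 0)"
  have sf: "msym \<phi>" using inH_msym[OF phi] .
  have sp: "msym \<psi>" using inH_msym[OF psi] .
  have lx: "length xs = k" using xs unfolding idx_def by simp
  have sP: "symP \<phi> = \<phi>" using symP_msym[OF sf] by (rule ext)
  have "symP (tensorI l (rdm N M \<psi> (k - l)) (symP \<phi>)) xs
      = symP (\<lambda>ys. cR * Qf N \<psi> \<phi> M (k - l) (take l ys) (drop l ys)) xs"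
    unfolding sP tensor_rdm cR_def ..
  also have "\<dots> = (\<Sum>\<sigma>\<in>{\<sigma>. \<sigma> permutes {..<k}}. cR * Qf N \<psi> \<phi> M (k - l) (take l (permute_list \<sigma> xs)) (drop l (permute_list \<sigma> xs)))
       / of_nat (fact k)"
    unfolding symP_alt lx ..
  also have "\<dots> = of_nat (fact l * fact (k - l)) * (\<Sum>A\<in>{A. A \<subseteq> {..<k} \<and> card A = l}. cR * Qf N \<psi> \<phi> M (k - l) (sel xs A) (sel xs ({..<k} - A)))
       / of_nat (fact k)"
    using Lemma_L[OF lx l bisym_Qf[OF sf sp, of cR N M "k - l"]] by simp
  also have "\<dots> = cR * (of_nat (fact l * fact (k - l)) / of_nat (fact k) *
      (\<Sum>A\<in>{A. A \<subseteq> {..<k} \<and> card A = l}. Qf N \<psi> \<phi> M (k - l) (sel xs A) (sel xs ({..<k} - A))))"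
    by (simp add: sum_distrib_left[symmetric] ac_simps)
  finally show ?thesis unfolding Tpow_def cR_def by simp
qed

lemma coef:
  assumes "l \<le> k"
  shows "(of_nat (fact k) * of_nat (M choose (k - l)) :: complex) =
    complex_of_real (real (k choose l)) * (of_nat (fact k) / of_nat (fact (k - l)) *
    ((if k - l \<le> M then of_nat (fact M) / of_nat (fact (M - (k - l))) else 0) *
     (of_nat (fact l * fact (k - l)) / of_nat (fact k))))"
proof (cases "k - l \<le> M")
  case False
  hence "M choose (k - l) = 0" by simp
  thus ?thesis using False by simp
next
  case True
  define m where "m = k - l"
  have h1: "fact l * fact (k - l) * (k choose l) = (fact k :: nat)" using binomial_fact_lemma[OF assms] .
  have h2: "fact m * fact (M - m) * (M choose m) = (fact M :: nat)" using binomial_fact_lemma[of m M] True m_def by simp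
  have b1: "(of_nat (k choose l) :: complex) = of_nat (fact k) / (of_nat (fact l) * of_nat (fact m))"
  proof -
    have "(of_nat (fact l) * of_nat (fact m) * of_nat (k choose l) :: complex) = of_nat (fact k)"
      using arg_cong[OF h1, of "of_nat :: nat \<Rightarrow> complex"] m_def by simp
    thus ?thesis by (simp add: field_simps)
  qed
  have b2: "(of_nat (M choose m) :: complex) = of_nat (fact M) / (of_nat (fact m) * of_nat (fact (M - m)))"
  proof -
    have "(of_nat (fact m) * of_nat (fact (M - m)) * of_nat (M choose m) :: complex) = of_nat (fact M)"
      using arg_cong[OF h2, of "of_nat :: nat \<Rightarrow> complex"] by simp
    thus ?thesis by (simp add: field_simps)
  qed
  have "complex_of_real (real (k choose l)) = of_nat (k choose l)" by simp
  thus ?thesis using True unfolding m_def[symmetric] b1 b2 by (simp add: field_simps)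
qed

theorem mainTheorem5:
  fixes N M k :: nat
  assumes "N \<ge> 2" and "M \<ge> 1"
  shows "\<exists>C :: nat \<Rightarrow> real. (\<forall>l\<le>k. C l > 0) \<and>
    (\<forall>\<psi>. unitH N M \<psi> \<longrightarrow>
      (\<forall>\<phi>. inH N k \<phi> \<longrightarrow>
        (\<forall>xs\<in>idx N k.
          W N M k (proj N M \<psi>) \<phi> xs =
          (\<Sum>l\<le>k. complex_of_real (C l) * Tpow k l (rdm N M \<psi> (k - l)) \<phi> xs))))"
proof (intro exI[of _ "\<lambda>l. real (k choose l)"] conjI allI impI ballI)
  fix l assume "l \<le> k" thus "real (k choose l) > 0" by simp
next
  fix \<psi> \<phi> xs assume u: "unitH N M \<psi>" and phi: "inH N k \<phi>" and xs: "xs \<in> idx N k"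
  have psi: "inH N M \<psi>" using u unfolding unitH_def by simp
  define f where "f = (\<lambda>A. of_nat (fact k) * of_nat (M choose (k - card A)) *
        Qf N \<psi> \<phi> M (k - card A) (sel xs A) (sel xs ({..<k} - A)))"
  have "W N M k (proj N M \<psi>) \<phi> xs = of_nat (fact k) * (\<Sum>A\<in>{A. A \<subseteq> {..<k}}. of_nat (M choose (k - card A)) *
        Qf N \<psi> \<phi> M (k - card A) (sel xs A) (sel xs ({..<k} - A)))"
    using W_formula[OF psi phi xs] LHS_formula[OF psi phi xs] by simp
  also have "\<dots> = (\<Sum>A\<in>{A. A \<subseteq> {..<k}}. f A)"
    unfolding f_def by (simp add: sum_distrib_left mult.assoc)
  also have "\<dots> = (\<Sum>l\<in>{..k}. \<Sum>A\<in>{A \<in> {A. A \<subseteq> {..<k}}. card A = l}. f A)"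
  proof (rule sum.group[symmetric])
    show "finite {A. A \<subseteq> {..<k}}" by (rule finite_subsets2)
    show "card ` {A. A \<subseteq> {..<k}} \<subseteq> {..k}"
    proof
      fix n assume "n \<in> card ` {A. A \<subseteq> {..<k}}"
      then obtain A where "A \<subseteq> {..<k}" "n = card A" by auto
      thus "n \<in> {..k}" using card_mono[of "{..<k}" A] by simp
    qed
  qed simp
  also have "\<dots> = (\<Sum>l\<le>k. complex_of_real (real (k choose l)) * Tpow k l (rdm N M \<psi> (k - l)) \<phi> xs)"
  proof (rule sum.cong[OF refl])
    fix l assume "l \<in> {..k}"
    hence l: "l \<le> k" by simp
    have "(\<Sum>A\<in>{A \<in> {A. A \<subseteq> {..<k}}. card A = l}. f A)
        = (\<Sum>A\<in>{A. A \<subseteq> {..<k} \<and> card A = l}. of_nat (fact k) * of_nat (M choose (k - l)) *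
            Qf N \<psi> \<phi> M (k - l) (sel xs A) (sel xs ({..<k} - A)))"
      unfolding f_def by (rule sum.cong) auto
    also have "\<dots> = (of_nat (fact k) * of_nat (M choose (k - l))) *
        (\<Sum>A\<in>{A. A \<subseteq> {..<k} \<and> card A = l}. Qf N \<psi> \<phi> M (k - l) (sel xs A) (sel xs ({..<k} - A)))"
      by (simp add: sum_distrib_left)
    also have "\<dots> = complex_of_real (real (k choose l)) * Tpow k l (rdm N M \<psi> (k - l)) \<phi> xs"
      unfolding coef[OF l, of M] RHS_term[OF l psi phi xs] by (simp only: mult.assoc)
    finally show "(\<Sum>A\<in>{A \<in> {A. A \<subseteq> {..<k}}. card A = l}. f A)
        = complex_of_real (real (k choose l)) * Tpow k l (rdm N M \<psi> (k - l)) \<phi> xs" .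
  qed
  finally show "W N M k (proj N M \<psi>) \<phi> xs =
      (\<Sum>l\<le>k. complex_of_real (real (k choose l)) * Tpow k l (rdm N M \<psi> (k - l)) \<phi> xs)" .
qed

end
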